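(* Let $R$ be a commutative ring with identity. The following are equivalent: (1) $R[X]_A$ is a residually principal ideal ring; (2) $R[X]_A$ is a residually valuation ring; (3) $R[X]_A$ is a residually Bézout ring; (4) $R[X]_A$ is a residually Prüfer ring; (5) $R$ is zero-dimensional (i.e., has Krull dimension $0$).
   Context: $X$ is an indeterminate over $R$, $A=\{f\in R[X]\mid f(0)=1\}$, and $R[X]_A$ is the localization of $R[X]$ at $A$. For a property (P) of integral domains, a ring $T$ is called residually (P) if $T/\mathfrak p$ has property (P) for every prime ideal $\mathfrak p$ of $T$. Thus "residually principal ideal ring" means $T/\mathfrak p$ is a principal ideal domain for all primes $\mathfrak p$, and similarly for valuation domains, Bézout domains (every finitely generated ideal principal) and Prüfer domains (every nonzero finitely generated ideal invertible). *)

theory Defs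
  imports "HOL-Algebra.UnivPoly" "HOL-Algebra.Ideal_Product"
          "HOL-Algebra.Ring_Divisibility" "HOL-Algebra.QuotRing"
begin

text \<open>The operations are defined
  by taking the union over all representatives (which is the class itself once the
  operations are shown to be well defined).\<close>

definition loc_rel :: "('a, 'b) ring_scheme \<Rightarrow> 'a set \<Rightarrow> (('a \<times> 'a) \<times> ('a \<times> 'a)) set" where
  "loc_rel P S = {((a, s), (b, t)). a \<in> carrier P \<and> s \<in> S \<and> b \<in> carrier P \<and> t \<in> S \<and>
      (\<exists>u\<in>S. u \<otimes>\<^bsub>P\<^esub> ((a \<otimes>\<^bsub>P\<^esub> t) \<ominus>\<^bsub>P\<^esub> (b \<otimes>\<^bsub>P\<^esub> s)) = \<zero>\<^bsub>P\<^esub>)}"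

definition loc_frac :: "('a, 'b) ring_scheme \<Rightarrow> 'a set \<Rightarrow> 'a \<Rightarrow> 'a \<Rightarrow> ('a \<times> 'a) set" where
  "loc_frac P S a s = loc_rel P S `` {(a, s)}"

definition localization :: "('a, 'b) ring_scheme \<Rightarrow> 'a set \<Rightarrow> (('a \<times> 'a) set) ring" where
  "localization P S = ring.make
     \<comment> \<open>carrier\<close>
     {loc_frac P S a s | a s. a \<in> carrier P \<and> s \<in> S}
     \<comment> \<open>multiplication\<close>
     (\<lambda>U V. \<Union> {loc_frac P S (a \<otimes>\<^bsub>P\<^esub> b) (s \<otimes>\<^bsub>P\<^esub> t) | a s b t.
              (a, s) \<in> U \<and> (b, t) \<in> V})
     \<comment> \<open>one\<close>
     (loc_frac P S \<one>\<^bsub>P\<^esub> \<one>\<^bsub>P\<^esub>)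
     \<comment> \<open>zero\<close>
     (loc_frac P S \<zero>\<^bsub>P\<^esub> \<one>\<^bsub>P\<^esub>)
     \<comment> \<open>addition\<close>
     (\<lambda>U V. \<Union> {loc_frac P S ((a \<otimes>\<^bsub>P\<^esub> t) \<oplus>\<^bsub>P\<^esub> (b \<otimes>\<^bsub>P\<^esub> s)) (s \<otimes>\<^bsub>P\<^esub> t) | a s b t.
              (a, s) \<in> U \<and> (b, t) \<in> V})"

lemma localization_simps:
  "carrier (localization P S) = {loc_frac P S a s | a s. a \<in> carrier P \<and> s \<in> S}"
  "one (localization P S) = loc_frac P S \<one>\<^bsub>P\<^esub> \<one>\<^bsub>P\<^esub>"
  "zero (localization P S) = loc_frac P S \<zero>\<^bsub>P\<^esub> \<one>\<^bsub>P\<^esub>"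
  by (simp_all add: localization_def ring.defs)

definition polyA :: "('a, 'm) ring_scheme \<Rightarrow> (nat \<Rightarrow> 'a) set" where
  "polyA R = {f \<in> carrier (UP R). coeff (UP R) f 0 = \<one>\<^bsub>R\<^esub>}"

definition RXA :: "('a, 'm) ring_scheme \<Rightarrow> (((nat \<Rightarrow> 'a) \<times> (nat \<Rightarrow> 'a)) set) ring" where
  "RXA R = localization (UP R) (polyA R)"

definition valuation_domain :: "('a, 'b) ring_scheme \<Rightarrow> bool" where
  "valuation_domain D \<longleftrightarrow> domain D \<and>
     (\<forall>a\<in>carrier D. \<forall>b\<in>carrier D. a divides\<^bsub>D\<^esub> b \<or> b divides\<^bsub>D\<^esub> a)"

definition bezout_domain :: "('a, 'b) ring_scheme \<Rightarrow> bool" where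
  "bezout_domain D \<longleftrightarrow> domain D \<and>
     (\<forall>F. finite F \<and> F \<subseteq> carrier D \<longrightarrow> (\<exists>a\<in>carrier D. Idl\<^bsub>D\<^esub> F = PIdl\<^bsub>D\<^esub> a))"

text \<open>An ideal I of a domain D is invertible (as a fractional ideal) iff I J = d D
  for some ideal J of D and some nonzero d in D (J = d I^{-1}).\<close>

definition invertible_ideal :: "('a, 'b) ring_scheme \<Rightarrow> 'a set \<Rightarrow> bool" where
  "invertible_ideal D I \<longleftrightarrow>
     (\<exists>J d. ideal J D \<and> d \<in> carrier D \<and> d \<noteq> \<zero>\<^bsub>D\<^esub> \<and> ideal_prod D I J = PIdl\<^bsub>D\<^esub> d)"

definition prufer_domain :: "('a, 'b) ring_scheme \<Rightarrow> bool" where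
  "prufer_domain D \<longleftrightarrow> domain D \<and>
     (\<forall>F. finite F \<and> F \<subseteq> carrier D \<and> Idl\<^bsub>D\<^esub> F \<noteq> {\<zero>\<^bsub>D\<^esub>} \<longrightarrow>
        invertible_ideal D (Idl\<^bsub>D\<^esub> F))"

definition residually :: "(('a set) ring \<Rightarrow> bool) \<Rightarrow> ('a, 'b) ring_scheme \<Rightarrow> bool" where
  "residually Prop T \<longleftrightarrow> (\<forall>p. primeideal p T \<longrightarrow> Prop (T Quot p))"

definition zero_dimensional :: "('a, 'b) ring_scheme \<Rightarrow> bool" where
  "zero_dimensional R \<longleftrightarrow> (\<forall>p. primeideal p R \<longrightarrow> maximalideal p R)"

end

theory Submission
  imports Defs
begin

lemma (in cring) diff_zero_iff:
  assumes "u \<in> carrier R" "x \<in> carrier R" "y \<in> carrier R"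
  shows "u \<otimes> (x \<ominus> y) = \<zero> \<longleftrightarrow> u \<otimes> x = u \<otimes> y"
proof -
  have "u \<otimes> (x \<ominus> y) = u \<otimes> x \<ominus> u \<otimes> y"
    using assms by (simp add: minus_eq r_distr r_minus)
  moreover have "a \<ominus> b = \<zero> \<longleftrightarrow> a = b" if "a \<in> carrier R" "b \<in> carrier R" for a b
    using that by (metis minus_eq r_neg add.inv_closed add.r_cancel_one' minus_minus minus_unique r_zero)
  ultimately show ?thesis using assms by simp
qed

locale loc_setup = cring P for P (structure) +
  fixes S
  assumes S_sub: "S \<subseteq> carrier P" and one_S: "\<one> \<in> S"
    and mult_S: "s \<in> S \<Longrightarrow> t \<in> S \<Longrightarrow> s \<otimes> t \<in> S"
begin

lemma S_carr: "s \<in> S \<Longrightarrow> s \<in> carrier P" using S_sub by blast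

lemma rel_iff:
  "((a, s), (b, t)) \<in> loc_rel P S \<longleftrightarrow> a \<in> carrier P \<and> s \<in> S \<and> b \<in> carrier P \<and> t \<in> S \<and>
     (\<exists>u\<in>S. u \<otimes> (a \<otimes> t) = u \<otimes> (b \<otimes> s))"
  unfolding loc_rel_def using diff_zero_iff S_carr by auto

lemma rel_equiv: "equiv (carrier P \<times> S) (loc_rel P S)"
proof (rule equivI)
  show "refl_on (carrier P \<times> S) (loc_rel P S)"
    using one_S unfolding refl_on_def loc_rel_def by (auto simp: diff_zero_iff S_carr)
  show "loc_rel P S \<subseteq> (carrier P \<times> S) \<times> carrier P \<times> S" unfolding loc_rel_def by auto
  show "sym (loc_rel P S)"
  proof (rule symI)
    fix x y assume "(x, y) \<in> loc_rel P S" then show "(y, x) \<in> loc_rel P S"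
      by (cases x, cases y) (auto simp: rel_iff, metis)
  qed
  show "trans (loc_rel P S)"
  proof (rule transI)
    fix x y z assume xy: "(x, y) \<in> loc_rel P S" and yz: "(y, z) \<in> loc_rel P S"
    obtain a s where x: "x = (a, s)" by (cases x)
    obtain b t where y: "y = (b, t)" by (cases y)
    obtain c w where z: "z = (c, w)" by (cases z)
    from xy obtain u where u: "u \<in> S" "u \<otimes> (a \<otimes> t) = u \<otimes> (b \<otimes> s)" and
      c1: "a \<in> carrier P" "s \<in> S" "b \<in> carrier P" "t \<in> S"
      by (auto simp: rel_iff x y)
    from yz obtain v where v: "v \<in> S" "v \<otimes> (b \<otimes> w) = v \<otimes> (c \<otimes> t)" and
      c2: "c \<in> carrier P" "w \<in> S"
      by (auto simp: rel_iff z y)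
    note cs = c1 c2 u(1) v(1)
    have cc: "a \<in> carrier P" "s \<in> carrier P" "b \<in> carrier P" "t \<in> carrier P" "c \<in> carrier P" "w \<in> carrier P"
       "u \<in> carrier P" "v \<in> carrier P" using cs S_carr by auto
    have "(u \<otimes> v \<otimes> t) \<otimes> (a \<otimes> w) = (v \<otimes> w) \<otimes> (u \<otimes> (a \<otimes> t))" using cc by (simp add: m_ac)
    also have "\<dots> = (v \<otimes> w) \<otimes> (u \<otimes> (b \<otimes> s))" using u by simp
    also have "\<dots> = (u \<otimes> s) \<otimes> (v \<otimes> (b \<otimes> w))" using cc by (simp add: m_ac)
    also have "\<dots> = (u \<otimes> s) \<otimes> (v \<otimes> (c \<otimes> t))" using v by simp
    also have "\<dots> = (u \<otimes> v \<otimes> t) \<otimes> (c \<otimes> s)" using cc by (simp add: m_ac)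
    finally have "(u \<otimes> v \<otimes> t) \<otimes> (a \<otimes> w) = (u \<otimes> v \<otimes> t) \<otimes> (c \<otimes> s)" .
    moreover have "u \<otimes> v \<otimes> t \<in> S" using cs by (simp add: mult_S)
    ultimately show "(x, z) \<in> loc_rel P S" using cs by (auto simp: rel_iff x z)
  qed
qed

lemma frac_eq:
  assumes "a \<in> carrier P" "s \<in> S" "b \<in> carrier P" "t \<in> S"
  shows "loc_frac P S a s = loc_frac P S b t \<longleftrightarrow> (\<exists>u\<in>S. u \<otimes> (a \<otimes> t) = u \<otimes> (b \<otimes> s))"
  unfolding loc_frac_def using eq_equiv_class_iff[OF rel_equiv, of "(a,s)" "(b,t)"] assms
  by (simp add: rel_iff)

lemma frac_eqI:
  assumes "a \<in> carrier P" "s \<in> S" "b \<in> carrier P" "t \<in> S" "a \<otimes> t = b \<otimes> s"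
  shows "loc_frac P S a s = loc_frac P S b t"
  using assms frac_eq one_S by (metis)

lemma mem_frac: "(b, t) \<in> loc_frac P S a s \<longleftrightarrow> ((a, s), (b, t)) \<in> loc_rel P S"
  unfolding loc_frac_def by auto

lemma mem_frac_eq:
  assumes "(b, t) \<in> loc_frac P S a s"
  shows "loc_frac P S b t = loc_frac P S a s" "b \<in> carrier P" "t \<in> S"
proof -
  have r: "((a, s), (b, t)) \<in> loc_rel P S" using assms mem_frac by blast
  then show "b \<in> carrier P" "t \<in> S" by (auto simp: rel_iff)
  show "loc_frac P S b t = loc_frac P S a s" unfolding loc_frac_def
    using r rel_equiv by (metis equiv_class_eq symD equiv_def)
qed

lemma self_mem: "a \<in> carrier P \<Longrightarrow> s \<in> S \<Longrightarrow> (a, s) \<in> loc_frac P S a s"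
  unfolding loc_frac_def using one_S by (auto simp: rel_iff)

lemma carrier_L: "carrier (localization P S) = {loc_frac P S a s | a s. a \<in> carrier P \<and> s \<in> S}"
  by (simp add: localization_simps)

lemma mult_wd:
  assumes "loc_frac P S a' s' = loc_frac P S a s" "loc_frac P S b' t' = loc_frac P S b t"
    "a \<in> carrier P" "s \<in> S" "b \<in> carrier P" "t \<in> S"
    "a' \<in> carrier P" "s' \<in> S" "b' \<in> carrier P" "t' \<in> S"
  shows "loc_frac P S (a' \<otimes> b') (s' \<otimes> t') = loc_frac P S (a \<otimes> b) (s \<otimes> t)"
proof -
  obtain u where u: "u \<in> S" "u \<otimes> (a' \<otimes> s) = u \<otimes> (a \<otimes> s')" using assms frac_eq by blast
  obtain v where v: "v \<in> S" "v \<otimes> (b' \<otimes> t) = v \<otimes> (b \<otimes> t')" using assms frac_eq by blast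
  have cc: "a \<in> carrier P" "s \<in> carrier P" "b \<in> carrier P" "t \<in> carrier P" "a' \<in> carrier P" "s' \<in> carrier P"
    "b' \<in> carrier P" "t' \<in> carrier P" "u \<in> carrier P" "v \<in> carrier P" using assms u v S_carr by auto
  have "(u \<otimes> v) \<otimes> ((a' \<otimes> b') \<otimes> (s \<otimes> t)) = (u \<otimes> (a' \<otimes> s)) \<otimes> (v \<otimes> (b' \<otimes> t))" using cc by (simp add: m_ac)
  also have "\<dots> = (u \<otimes> (a \<otimes> s')) \<otimes> (v \<otimes> (b \<otimes> t'))" using u v by simp
  also have "\<dots> = (u \<otimes> v) \<otimes> ((a \<otimes> b) \<otimes> (s' \<otimes> t'))" using cc by (simp add: m_ac)
  finally show ?thesis using assms u v by (subst frac_eq) (auto intro!: bexI[of _ "u \<otimes> v"] simp: mult_S S_carr)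
qed

lemma add_wd:
  assumes "loc_frac P S a' s' = loc_frac P S a s" "loc_frac P S b' t' = loc_frac P S b t"
    "a \<in> carrier P" "s \<in> S" "b \<in> carrier P" "t \<in> S"
    "a' \<in> carrier P" "s' \<in> S" "b' \<in> carrier P" "t' \<in> S"
  shows "loc_frac P S (a' \<otimes> t' \<oplus> b' \<otimes> s') (s' \<otimes> t') = loc_frac P S (a \<otimes> t \<oplus> b \<otimes> s) (s \<otimes> t)"
proof -
  obtain u where u: "u \<in> S" "u \<otimes> (a' \<otimes> s) = u \<otimes> (a \<otimes> s')" using assms frac_eq by blast
  obtain v where v: "v \<in> S" "v \<otimes> (b' \<otimes> t) = v \<otimes> (b \<otimes> t')" using assms frac_eq by blast
  have cc: "a \<in> carrier P" "s \<in> carrier P" "b \<in> carrier P" "t \<in> carrier P" "a' \<in> carrier P" "s' \<in> carrier P"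
    "b' \<in> carrier P" "t' \<in> carrier P" "u \<in> carrier P" "v \<in> carrier P" using assms u v S_carr by auto
  have "(u \<otimes> v) \<otimes> ((a' \<otimes> t' \<oplus> b' \<otimes> s') \<otimes> (s \<otimes> t))
      = (u \<otimes> (a' \<otimes> s)) \<otimes> (v \<otimes> t' \<otimes> t) \<oplus> (v \<otimes> (b' \<otimes> t)) \<otimes> (u \<otimes> s' \<otimes> s)"
    using cc by (simp add: m_ac l_distr r_distr)
  also have "\<dots> = (u \<otimes> (a \<otimes> s')) \<otimes> (v \<otimes> t' \<otimes> t) \<oplus> (v \<otimes> (b \<otimes> t')) \<otimes> (u \<otimes> s' \<otimes> s)" using u v by simp
  also have "\<dots> = (u \<otimes> v) \<otimes> ((a \<otimes> t \<oplus> b \<otimes> s) \<otimes> (s' \<otimes> t'))" using cc by (simp add: m_ac l_distr r_distr)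
  finally show ?thesis using assms u v by (subst frac_eq) (auto intro!: bexI[of _ "u \<otimes> v"] simp: mult_S S_carr)
qed

lemma union_single: "(\<forall>X\<in>A. X = t) \<Longrightarrow> t \<in> A \<Longrightarrow> \<Union>A = t" by blast

lemma L_mult:
  assumes "a \<in> carrier P" "s \<in> S" "b \<in> carrier P" "t \<in> S"
  shows "loc_frac P S a s \<otimes>\<^bsub>localization P S\<^esub> loc_frac P S b t = loc_frac P S (a \<otimes> b) (s \<otimes> t)"
proof -
  have "\<Union>{loc_frac P S (a' \<otimes> b') (s' \<otimes> t') | a' s' b' t'.
        (a', s') \<in> loc_frac P S a s \<and> (b', t') \<in> loc_frac P S b t} = loc_frac P S (a \<otimes> b) (s \<otimes> t)"
  proof (rule union_single)
    show "\<forall>X\<in>{loc_frac P S (a' \<otimes> b') (s' \<otimes> t') | a' s' b' t'.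
        (a', s') \<in> loc_frac P S a s \<and> (b', t') \<in> loc_frac P S b t}. X = loc_frac P S (a \<otimes> b) (s \<otimes> t)"
    proof
      fix X assume "X \<in> {loc_frac P S (a' \<otimes> b') (s' \<otimes> t') | a' s' b' t'.
        (a', s') \<in> loc_frac P S a s \<and> (b', t') \<in> loc_frac P S b t}"
      then obtain a' s' b' t' where X: "X = loc_frac P S (a' \<otimes> b') (s' \<otimes> t')"
        and m: "(a', s') \<in> loc_frac P S a s" "(b', t') \<in> loc_frac P S b t" by blast
      show "X = loc_frac P S (a \<otimes> b) (s \<otimes> t)"
        using mult_wd[OF mem_frac_eq(1)[OF m(1)] mem_frac_eq(1)[OF m(2)] assms
          mem_frac_eq(2,3)[OF m(1)] mem_frac_eq(2,3)[OF m(2)]] X by simp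
    qed
    show "loc_frac P S (a \<otimes> b) (s \<otimes> t) \<in> {loc_frac P S (a' \<otimes> b') (s' \<otimes> t') | a' s' b' t'.
        (a', s') \<in> loc_frac P S a s \<and> (b', t') \<in> loc_frac P S b t}"
      using self_mem assms by blast
  qed
  then show ?thesis by (simp add: localization_def ring.defs)
qed

lemma L_add:
  assumes "a \<in> carrier P" "s \<in> S" "b \<in> carrier P" "t \<in> S"
  shows "loc_frac P S a s \<oplus>\<^bsub>localization P S\<^esub> loc_frac P S b t = loc_frac P S (a \<otimes> t \<oplus> b \<otimes> s) (s \<otimes> t)"
proof -
  have "\<Union>{loc_frac P S (a' \<otimes> t' \<oplus> b' \<otimes> s') (s' \<otimes> t') | a' s' b' t'.
        (a', s') \<in> loc_frac P S a s \<and> (b', t') \<in> loc_frac P S b t} = loc_frac P S (a \<otimes> t \<oplus> b \<otimes> s) (s \<otimes> t)"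
  proof (rule union_single)
    show "\<forall>X\<in>{loc_frac P S (a' \<otimes> t' \<oplus> b' \<otimes> s') (s' \<otimes> t') | a' s' b' t'.
        (a', s') \<in> loc_frac P S a s \<and> (b', t') \<in> loc_frac P S b t}. X = loc_frac P S (a \<otimes> t \<oplus> b \<otimes> s) (s \<otimes> t)"
    proof
      fix X assume "X \<in> {loc_frac P S (a' \<otimes> t' \<oplus> b' \<otimes> s') (s' \<otimes> t') | a' s' b' t'.
        (a', s') \<in> loc_frac P S a s \<and> (b', t') \<in> loc_frac P S b t}"
      then obtain a' s' b' t' where X: "X = loc_frac P S (a' \<otimes> t' \<oplus> b' \<otimes> s') (s' \<otimes> t')"
        and m: "(a', s') \<in> loc_frac P S a s" "(b', t') \<in> loc_frac P S b t" by blast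
      show "X = loc_frac P S (a \<otimes> t \<oplus> b \<otimes> s) (s \<otimes> t)"
        using add_wd[OF mem_frac_eq(1)[OF m(1)] mem_frac_eq(1)[OF m(2)] assms
          mem_frac_eq(2,3)[OF m(1)] mem_frac_eq(2,3)[OF m(2)]] X by simp
    qed
    show "loc_frac P S (a \<otimes> t \<oplus> b \<otimes> s) (s \<otimes> t) \<in> {loc_frac P S (a' \<otimes> t' \<oplus> b' \<otimes> s') (s' \<otimes> t') | a' s' b' t'.
        (a', s') \<in> loc_frac P S a s \<and> (b', t') \<in> loc_frac P S b t}"
      using self_mem assms by blast
  qed
  then show ?thesis by (simp add: localization_def ring.defs)
qed

end

context loc_setup begin

lemma carr_frac: "a \<in> carrier P \<Longrightarrow> s \<in> S \<Longrightarrow> loc_frac P S a s \<in> carrier (localization P S)"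
  by (auto simp: carrier_L)

lemma carr_E:
  assumes "F \<in> carrier (localization P S)"
  obtains a s where "F = loc_frac P S a s" "a \<in> carrier P" "s \<in> S"
  using assms by (auto simp: carrier_L)

lemma L_zero: "\<zero>\<^bsub>localization P S\<^esub> = loc_frac P S \<zero> \<one>" by (simp add: localization_simps)
lemma L_one: "\<one>\<^bsub>localization P S\<^esub> = loc_frac P S \<one> \<one>" by (simp add: localization_simps)

lemma L_cring: "cring (localization P S)"
proof (rule cringI)
  show "abelian_group (localization P S)"
  proof (rule abelian_groupI)
    fix x y assume "x \<in> carrier (localization P S)" "y \<in> carrier (localization P S)"
    then show "x \<oplus>\<^bsub>localization P S\<^esub> y \<in> carrier (localization P S)"
      by (elim carr_E) (simp add: L_add carr_frac mult_S S_carr)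
  next
    show "\<zero>\<^bsub>localization P S\<^esub> \<in> carrier (localization P S)" by (simp add: L_zero carr_frac one_S)
  next
    fix x y z assume "x \<in> carrier (localization P S)" "y \<in> carrier (localization P S)" "z \<in> carrier (localization P S)"
    then show "x \<oplus>\<^bsub>localization P S\<^esub> y \<oplus>\<^bsub>localization P S\<^esub> z =
       x \<oplus>\<^bsub>localization P S\<^esub> (y \<oplus>\<^bsub>localization P S\<^esub> z)"
      by (elim carr_E) (simp add: L_add mult_S S_carr, rule frac_eqI,
        simp_all add: mult_S S_carr m_ac a_ac l_distr r_distr)
  next
    fix x y assume "x \<in> carrier (localization P S)" "y \<in> carrier (localization P S)"
    then show "x \<oplus>\<^bsub>localization P S\<^esub> y = y \<oplus>\<^bsub>localization P S\<^esub> x"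
      by (elim carr_E) (simp add: L_add mult_S S_carr, rule frac_eqI,
        simp_all add: mult_S S_carr m_ac a_ac l_distr r_distr)
  next
    fix x assume "x \<in> carrier (localization P S)"
    then show "\<zero>\<^bsub>localization P S\<^esub> \<oplus>\<^bsub>localization P S\<^esub> x = x"
      by (elim carr_E) (simp add: L_zero L_add one_S mult_S S_carr)
  next
    fix x assume "x \<in> carrier (localization P S)"
    then show "\<exists>y\<in>carrier (localization P S). y \<oplus>\<^bsub>localization P S\<^esub> x = \<zero>\<^bsub>localization P S\<^esub>"
    proof (elim carr_E)
      fix a s assume x: "x = loc_frac P S a s" "a \<in> carrier P" "s \<in> S"
      show ?thesis
      proof (intro bexI)
        show "loc_frac P S (\<ominus> a) s \<in> carrier (localization P S)" using x by (simp add: carr_frac)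
        show "loc_frac P S (\<ominus> a) s \<oplus>\<^bsub>localization P S\<^esub> x = \<zero>\<^bsub>localization P S\<^esub>"
          using x by (simp add: L_zero L_add mult_S S_carr)
            (rule frac_eqI; simp add: mult_S one_S S_carr l_minus l_neg)
      qed
    qed
  qed
next
  show "comm_monoid (localization P S)"
  proof (rule comm_monoidI)
    fix x y assume "x \<in> carrier (localization P S)" "y \<in> carrier (localization P S)"
    then show "x \<otimes>\<^bsub>localization P S\<^esub> y \<in> carrier (localization P S)"
      by (elim carr_E) (simp add: L_mult carr_frac mult_S S_carr)
  next
    show "\<one>\<^bsub>localization P S\<^esub> \<in> carrier (localization P S)" by (simp add: L_one carr_frac one_S)
  next
    fix x y z assume "x \<in> carrier (localization P S)" "y \<in> carrier (localization P S)" "z \<in> carrier (localization P S)"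
    then show "x \<otimes>\<^bsub>localization P S\<^esub> y \<otimes>\<^bsub>localization P S\<^esub> z =
       x \<otimes>\<^bsub>localization P S\<^esub> (y \<otimes>\<^bsub>localization P S\<^esub> z)"
      by (elim carr_E) (simp add: L_mult mult_S S_carr m_assoc)
  next
    fix x assume "x \<in> carrier (localization P S)"
    then show "\<one>\<^bsub>localization P S\<^esub> \<otimes>\<^bsub>localization P S\<^esub> x = x"
      by (elim carr_E) (simp add: L_one L_mult one_S S_carr)
  next
    fix x y assume "x \<in> carrier (localization P S)" "y \<in> carrier (localization P S)"
    then show "x \<otimes>\<^bsub>localization P S\<^esub> y = y \<otimes>\<^bsub>localization P S\<^esub> x"
      by (elim carr_E) (simp add: L_mult S_carr m_comm)
  qed
next
  fix x y z assume "x \<in> carrier (localization P S)" "y \<in> carrier (localization P S)" "z \<in> carrier (localization P S)"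
  then show "(x \<oplus>\<^bsub>localization P S\<^esub> y) \<otimes>\<^bsub>localization P S\<^esub> z =
       x \<otimes>\<^bsub>localization P S\<^esub> z \<oplus>\<^bsub>localization P S\<^esub> y \<otimes>\<^bsub>localization P S\<^esub> z"
    by (elim carr_E) (simp add: L_add L_mult mult_S S_carr, rule frac_eqI,
        simp_all add: mult_S S_carr m_ac a_ac l_distr r_distr)
qed

end

lemma (in ring) idealI2:
  assumes "I \<subseteq> carrier R" "\<zero> \<in> I" "\<And>a b. a \<in> I \<Longrightarrow> b \<in> I \<Longrightarrow> a \<oplus> b \<in> I"
    "\<And>a. a \<in> I \<Longrightarrow> \<ominus> a \<in> I"
    "\<And>a x. a \<in> I \<Longrightarrow> x \<in> carrier R \<Longrightarrow> x \<otimes> a \<in> I"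
    "\<And>a x. a \<in> I \<Longrightarrow> x \<in> carrier R \<Longrightarrow> a \<otimes> x \<in> I"
  shows "ideal I R"
proof (rule idealI[OF ring_axioms])
  show "subgroup I (add_monoid R)"
    using assms unfolding subgroup_def by (simp add: a_inv_def[symmetric])
qed (use assms in auto)

definition loc_ext :: "('a, 'b) ring_scheme \<Rightarrow> 'a set \<Rightarrow> 'a set \<Rightarrow> ('a \<times> 'a) set set" where
  "loc_ext P S Q = {loc_frac P S a s | a s. a \<in> Q \<and> s \<in> S}"

context loc_setup begin

lemma L_minus:
  assumes "a \<in> carrier P" "s \<in> S"
  shows "\<ominus>\<^bsub>localization P S\<^esub> loc_frac P S a s = loc_frac P S (\<ominus> a) s"
proof -
  interpret L: cring "localization P S" by (rule L_cring)
  have "loc_frac P S (\<ominus> a) s \<oplus>\<^bsub>localization P S\<^esub> loc_frac P S a s = \<zero>\<^bsub>localization P S\<^esub>"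
    using assms by (simp add: L_zero L_add mult_S S_carr)
            (rule frac_eqI; simp add: mult_S one_S S_carr l_minus l_neg)
  then show ?thesis
    using L.sum_zero_eq_neg assms by (metis carr_frac add.inv_closed)
qed

lemma lfrac_hom: "(\<lambda>a. loc_frac P S a \<one>) \<in> ring_hom P (localization P S)"
  by (rule ring_hom_memI) (auto simp: carr_frac one_S L_mult L_add L_one)

lemma lfrac_hom_ring: "ring_hom_ring P (localization P S) (\<lambda>a. loc_frac P S a \<one>)"
  by (rule ring_hom_ringI2[OF ring_axioms cring.axioms(1)[OF L_cring] lfrac_hom])

lemma frac_decomp:
  assumes "a \<in> carrier P" "s \<in> S"
  shows "loc_frac P S a s = loc_frac P S a \<one> \<otimes>\<^bsub>localization P S\<^esub> loc_frac P S \<one> s"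
  using assms by (simp add: L_mult one_S S_carr)

lemma S_inv:
  assumes "s \<in> S"
  shows "loc_frac P S s \<one> \<otimes>\<^bsub>localization P S\<^esub> loc_frac P S \<one> s = \<one>\<^bsub>localization P S\<^esub>"
  using assms by (simp add: L_mult L_one one_S S_carr) (rule frac_eqI; simp add: one_S S_carr)

lemma S_unit:
  assumes "s \<in> S"
  shows "loc_frac P S s \<one> \<in> Units (localization P S)" "loc_frac P S \<one> s \<in> Units (localization P S)"
proof -
  interpret L: cring "localization P S" by (rule L_cring)
  have c: "loc_frac P S s \<one> \<in> carrier (localization P S)" "loc_frac P S \<one> s \<in> carrier (localization P S)"
    using assms by (auto simp: carr_frac one_S S_carr)
  have e: "loc_frac P S s \<one> \<otimes>\<^bsub>localization P S\<^esub> loc_frac P S \<one> s = \<one>\<^bsub>localization P S\<^esub>"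
    by (rule S_inv[OF assms])
  then have e2: "loc_frac P S \<one> s \<otimes>\<^bsub>localization P S\<^esub> loc_frac P S s \<one> = \<one>\<^bsub>localization P S\<^esub>"
    using L.m_comm c by simp
  show "loc_frac P S s \<one> \<in> Units (localization P S)" "loc_frac P S \<one> s \<in> Units (localization P S)"
    unfolding Units_def using c e e2 by blast+
qed

lemma frac_zero_iff:
  assumes "a \<in> carrier P" "s \<in> S"
  shows "loc_frac P S a s = \<zero>\<^bsub>localization P S\<^esub> \<longleftrightarrow> (\<exists>u\<in>S. u \<otimes> a = \<zero>)"
  using assms by (simp add: L_zero frac_eq one_S S_carr)

context
  fixes Q assumes Q: "primeideal Q P" and QS: "Q \<inter> S = {}"
begin

lemma ext_mem_iff:
  assumes "a \<in> carrier P" "s \<in> S"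
  shows "loc_frac P S a s \<in> loc_ext P S Q \<longleftrightarrow> a \<in> Q"
proof
  assume "a \<in> Q" then show "loc_frac P S a s \<in> loc_ext P S Q" using assms unfolding loc_ext_def by blast
next
  assume "loc_frac P S a s \<in> loc_ext P S Q"
  then obtain b t where bt: "b \<in> Q" "t \<in> S" "loc_frac P S a s = loc_frac P S b t"
    unfolding loc_ext_def by blast
  have bc: "b \<in> carrier P" using bt Q by (meson primeideal.axioms(1) ideal.Icarr)
  obtain u where u: "u \<in> S" "u \<otimes> (a \<otimes> t) = u \<otimes> (b \<otimes> s)" using frac_eq assms bt bc by blast
  have "u \<otimes> (b \<otimes> s) \<in> Q" using bt u assms Q S_carr
    by (meson primeideal.axioms(1) ideal.I_l_closed ideal.I_r_closed)
  then have "u \<otimes> (a \<otimes> t) \<in> Q" using u by simp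
  then have "u \<in> Q \<or> a \<otimes> t \<in> Q" using primeideal.I_prime[OF Q] u assms bt S_carr by simp
  then have "a \<in> Q \<or> t \<in> Q" using primeideal.I_prime[OF Q] u assms bt S_carr QS by blast
  then show "a \<in> Q" using QS bt by blast
qed

lemma ext_prime: "primeideal (loc_ext P S Q) (localization P S)"
proof -
  interpret L: cring "localization P S" by (rule L_cring)
  interpret Q: primeideal Q P by (rule Q)
  have Qc: "a \<in> Q \<Longrightarrow> a \<in> carrier P" for a using Q.Icarr by blast
  have ideal: "ideal (loc_ext P S Q) (localization P S)"
  proof (rule L.idealI2)
    show "loc_ext P S Q \<subseteq> carrier (localization P S)" unfolding loc_ext_def using carr_frac Qc by auto
    show "\<zero>\<^bsub>localization P S\<^esub> \<in> loc_ext P S Q" unfolding loc_ext_def L_zero using one_S Q.zero_closed by blast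
  next
    fix x y assume "x \<in> loc_ext P S Q" "y \<in> loc_ext P S Q"
    then obtain a s b t where "x = loc_frac P S a s" "a \<in> Q" "s \<in> S" "y = loc_frac P S b t" "b \<in> Q" "t \<in> S"
      unfolding loc_ext_def by blast
    then show "x \<oplus>\<^bsub>localization P S\<^esub> y \<in> loc_ext P S Q"
      using Qc S_carr by (simp add: L_add) (auto simp: ext_mem_iff mult_S Q.I_r_closed)
  next
    fix x assume "x \<in> loc_ext P S Q"
    then obtain a s where "x = loc_frac P S a s" "a \<in> Q" "s \<in> S" unfolding loc_ext_def by blast
    then show "\<ominus>\<^bsub>localization P S\<^esub> x \<in> loc_ext P S Q"
      using Qc by (simp add: L_minus ext_mem_iff Q.a_inv_closed)
  next
    fix x y assume "x \<in> loc_ext P S Q" "y \<in> carrier (localization P S)"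
    then obtain a s b t where "x = loc_frac P S a s" "a \<in> Q" "s \<in> S" "y = loc_frac P S b t" "b \<in> carrier P" "t \<in> S"
      unfolding loc_ext_def by (blast elim: carr_E)
    then show "y \<otimes>\<^bsub>localization P S\<^esub> x \<in> loc_ext P S Q" "x \<otimes>\<^bsub>localization P S\<^esub> y \<in> loc_ext P S Q"
      using Qc by (simp_all add: L_mult ext_mem_iff mult_S Q.I_r_closed Q.I_l_closed)
  qed
  show ?thesis
  proof (rule primeidealI[OF ideal L.is_cring])
    show "carrier (localization P S) \<noteq> loc_ext P S Q"
    proof
      assume "carrier (localization P S) = loc_ext P S Q"
      then have "loc_frac P S \<one> \<one> \<in> loc_ext P S Q" using carr_frac one_S by auto
      then have "\<one> \<in> Q" using ext_mem_iff one_S by simp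
      then show False using Q.I_notcarr Q.one_imp_carrier by simp
    qed
  next
    fix x y assume "x \<in> carrier (localization P S)" "y \<in> carrier (localization P S)"
      "x \<otimes>\<^bsub>localization P S\<^esub> y \<in> loc_ext P S Q"
    then obtain a s b t where "x = loc_frac P S a s" "a \<in> carrier P" "s \<in> S" "y = loc_frac P S b t" "b \<in> carrier P" "t \<in> S"
      "x \<otimes>\<^bsub>localization P S\<^esub> y \<in> loc_ext P S Q" by (blast elim: carr_E)
    then show "x \<in> loc_ext P S Q \<or> y \<in> loc_ext P S Q"
      by (simp add: L_mult ext_mem_iff mult_S Q.I_prime)
  qed
qed

end
end

lemma (in ring) PIdl_zero: "PIdl \<zero> = {\<zero>}"
proof -
  have "\<zero> \<in> PIdl \<zero>" unfolding cgenideal_def by (rule CollectI, rule exI[of _ \<one>]) simp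
  moreover have "PIdl \<zero> \<subseteq> {\<zero>}" unfolding cgenideal_def by auto
  ultimately show ?thesis by blast
qed

lemma (in domain) pid_bezout: "principal_domain R \<Longrightarrow> bezout_domain R"
  unfolding bezout_domain_def
  using domain_axioms genideal_ideal principal_domain.exists_gen by blast

lemma (in domain) bezout_prufer:
  assumes "bezout_domain R" shows "prufer_domain R"
  unfolding prufer_domain_def
proof (intro conjI allI impI)
  show "domain R" by (rule domain_axioms)
  fix F assume F: "finite F \<and> F \<subseteq> carrier R \<and> Idl F \<noteq> {\<zero>}"
  then obtain a where a: "a \<in> carrier R" "Idl F = PIdl a" using assms unfolding bezout_domain_def by blast
  have "a \<noteq> \<zero>"
  proof
    assume "a = \<zero>" then have "PIdl a = {\<zero>}" using PIdl_zero by simp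
    then show False using F a by simp
  qed
  moreover have "ideal_prod R (Idl F) (carrier R) = PIdl a"
    using a ideal_prod_one cgenideal_ideal by simp
  ultimately show "invertible_ideal R (Idl F)"
    unfolding invertible_ideal_def using a oneideal by blast
qed


lemma (in domain) nf_pid:
  assumes x: "x \<in> carrier R"
    and nf: "\<And>y. y \<in> carrier R \<Longrightarrow> y = \<zero> \<or> (\<exists>u\<in>Units R. \<exists>n::nat. y = u \<otimes> x [^] n)"
  shows "principal_domain R"
proof (intro principal_domain.intro domain_axioms principal_domain_axioms.intro)
  fix I assume I: "ideal I R"
  interpret I: ideal I R by (rule I)
  show "\<exists>a\<in>carrier R. I = PIdl a"
  proof (cases "I \<subseteq> {\<zero>}")
    case True
    then have "I = PIdl \<zero>" using PIdl_zero I.zero_closed by auto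
    then show ?thesis by blast
  next
    case False
    then obtain y where y: "y \<in> I" "y \<noteq> \<zero>" by blast
    define Pn where "Pn = (\<lambda>n::nat. \<exists>y\<in>I. \<exists>u\<in>Units R. y = u \<otimes> x [^] n)"
    have ex: "\<exists>n. Pn n" using nf[of y] y I.Icarr unfolding Pn_def by blast
    define n0 where "n0 = (LEAST n. Pn n)"
    have "Pn n0" unfolding n0_def using ex by (rule LeastI_ex)
    then obtain y0 u0 where y0: "y0 \<in> I" "u0 \<in> Units R" "y0 = u0 \<otimes> x [^] n0" unfolding Pn_def by blast
    have xn0: "x [^] n0 = inv u0 \<otimes> y0"
      using y0 x by (simp add: m_assoc[symmetric] Units_l_inv Units_closed)
    have xI: "x [^] n0 \<in> I" unfolding xn0 using y0 by (simp add: I.I_l_closed Units_inv_closed Units_closed)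
    have "I = PIdl (x [^] n0)"
    proof
      show "PIdl (x [^] n0) \<subseteq> I" unfolding cgenideal_def using xI I.I_l_closed by blast
      show "I \<subseteq> PIdl (x [^] n0)"
      proof
        fix z assume z: "z \<in> I"
        show "z \<in> PIdl (x [^] n0)"
        proof (cases "z = \<zero>")
          case True
          have "z = \<zero> \<otimes> x [^] n0" using True x by simp
          then show ?thesis unfolding cgenideal_def using zero_closed by blast
        next
          case False
          then obtain v and m :: nat where v: "v \<in> Units R" "z = v \<otimes> x [^] m" using nf[of z] z I.Icarr by blast
          then have "Pn m" unfolding Pn_def using z by blast
          then have "n0 \<le> m" unfolding n0_def by (rule Least_le)
          then have "x [^] m = x [^] (m - n0) \<otimes> x [^] n0" using x by (simp add: nat_pow_mult)
          then have "z = (v \<otimes> x [^] (m - n0)) \<otimes> x [^] n0" using v x by (simp add: m_assoc Units_closed)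
          moreover have "v \<otimes> x [^] (m - n0) \<in> carrier R" using v x by (simp add: Units_closed)
          ultimately show ?thesis unfolding cgenideal_def by blast
        qed
      qed
    qed
    then show ?thesis using x by blast
  qed
qed


lemma (in domain) nf_valuation:
  assumes x: "x \<in> carrier R"
    and nf: "\<And>y. y \<in> carrier R \<Longrightarrow> y = \<zero> \<or> (\<exists>u\<in>Units R. \<exists>n::nat. y = u \<otimes> x [^] n)"
  shows "valuation_domain R"
  unfolding valuation_domain_def
proof (intro conjI ballI domain_axioms)
  fix a b assume ab: "a \<in> carrier R" "b \<in> carrier R"
  show "a divides b \<or> b divides a"
  proof (cases "a = \<zero> \<or> b = \<zero>")
    case True
    then show ?thesis using ab by (metis dividesI r_null zero_closed)
  next
    case False
    then have "a \<noteq> \<zero>" "b \<noteq> \<zero>" by auto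
    then obtain u v and n m :: nat where u: "u \<in> Units R" "a = u \<otimes> x [^] n" and v: "v \<in> Units R" "b = v \<otimes> x [^] m"
    proof -
      have "\<exists>u\<in>Units R. \<exists>n::nat. a = u \<otimes> x [^] n" using nf[OF ab(1)] \<open>a \<noteq> \<zero>\<close> by simp
      moreover have "\<exists>u\<in>Units R. \<exists>n::nat. b = u \<otimes> x [^] n" using nf[OF ab(2)] \<open>b \<noteq> \<zero>\<close> by simp
      ultimately show ?thesis using that by blast
    qed
    have uc: "u \<in> carrier R" "inv u \<in> carrier R" "v \<in> carrier R" "inv v \<in> carrier R"
      using u v by (auto simp: Units_closed)
    show ?thesis
    proof (cases "n \<le> m")
      case True
      have "b = a \<otimes> (inv u \<otimes> v \<otimes> x [^] (m - n))"
      proof -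
        have "x [^] m = x [^] n \<otimes> x [^] (m - n)" using x True by (simp add: nat_pow_mult)
        have "a \<otimes> (inv u \<otimes> v \<otimes> x [^] (m - n)) = (u \<otimes> inv u) \<otimes> v \<otimes> (x [^] n \<otimes> x [^] (m - n))"
          using u(2) uc x by (simp add: m_ac)
        also have "\<dots> = b" using u(1) v(2) uc x \<open>x [^] m = _\<close> by simp
        finally show ?thesis by simp
      qed
      then show ?thesis using uc x by (metis dividesI m_closed nat_pow_closed)
    next
      case False
      have "a = b \<otimes> (inv v \<otimes> u \<otimes> x [^] (n - m))"
      proof -
        have "x [^] n = x [^] m \<otimes> x [^] (n - m)" using x False by (simp add: nat_pow_mult)
        have "b \<otimes> (inv v \<otimes> u \<otimes> x [^] (n - m)) = (v \<otimes> inv v) \<otimes> u \<otimes> (x [^] m \<otimes> x [^] (n - m))"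
          using v(2) uc x by (simp add: m_ac)
        also have "\<dots> = a" using v(1) u(2) uc x \<open>x [^] n = _\<close> by simp
        finally show ?thesis by simp
      qed
      then show ?thesis using uc x by (metis dividesI m_closed nat_pow_closed)
    qed
  qed
qed


lemma (in cring) Idl_two_sub:
  assumes "a \<in> carrier R" "x \<in> carrier R"
  shows "Idl {a, x} \<subseteq> {a \<otimes> r \<oplus> x \<otimes> s | r s. r \<in> carrier R \<and> s \<in> carrier R}"
proof (rule genideal_minimal)
  let ?M = "{a \<otimes> r \<oplus> x \<otimes> s | r s. r \<in> carrier R \<and> s \<in> carrier R}"
  show "{a, x} \<subseteq> ?M"
  proof
    fix y assume "y \<in> {a, x}"
    then show "y \<in> ?M"
    proof
      assume "y = a"
      then have "y = a \<otimes> \<one> \<oplus> x \<otimes> \<zero>" using assms by simp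
      then show ?thesis using one_closed zero_closed by blast
    next
      assume "y \<in> {x}"
      then have "y = a \<otimes> \<zero> \<oplus> x \<otimes> \<one>" using assms by simp
      then show ?thesis using one_closed zero_closed by blast
    qed
  qed
  show "ideal ?M R"
  proof (rule idealI)
    show "ring R" by (rule ring_axioms)
    show "subgroup ?M (add_monoid R)"
    proof (rule subgroup.intro)
      show "?M \<subseteq> carrier (add_monoid R)" using assms by auto
    next
      fix y z assume "y \<in> ?M" "z \<in> ?M"
      then obtain r s r' s' where "y = a \<otimes> r \<oplus> x \<otimes> s" "z = a \<otimes> r' \<oplus> x \<otimes> s'"
        "r \<in> carrier R" "s \<in> carrier R" "r' \<in> carrier R" "s' \<in> carrier R" by blast
      moreover have "a \<otimes> r \<oplus> x \<otimes> s \<oplus> (a \<otimes> r' \<oplus> x \<otimes> s') = a \<otimes> (r \<oplus> r') \<oplus> x \<otimes> (s \<oplus> s')"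
        using assms calculation by algebra
      ultimately show "y \<otimes>\<^bsub>add_monoid R\<^esub> z \<in> ?M" by auto
    next
      have "\<zero> = a \<otimes> \<zero> \<oplus> x \<otimes> \<zero>" using assms by simp
      then show "\<one>\<^bsub>add_monoid R\<^esub> \<in> ?M" using zero_closed by auto
    next
      fix y assume "y \<in> ?M"
      then obtain r s where "y = a \<otimes> r \<oplus> x \<otimes> s" "r \<in> carrier R" "s \<in> carrier R" by blast
      moreover have "\<ominus> (a \<otimes> r \<oplus> x \<otimes> s) = a \<otimes> (\<ominus> r) \<oplus> x \<otimes> (\<ominus> s)"
        using assms calculation by algebra
      ultimately show "inv\<^bsub>add_monoid R\<^esub> y \<in> ?M" by (auto simp: a_inv_def[symmetric])
    qed
  next
    fix y z assume "y \<in> ?M" "z \<in> carrier R"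
    then obtain r s where "y = a \<otimes> r \<oplus> x \<otimes> s" "r \<in> carrier R" "s \<in> carrier R" by blast
    moreover have "z \<otimes> (a \<otimes> r \<oplus> x \<otimes> s) = a \<otimes> (z \<otimes> r) \<oplus> x \<otimes> (z \<otimes> s)"
      using assms calculation \<open>z \<in> carrier R\<close> by algebra
    moreover have "(a \<otimes> r \<oplus> x \<otimes> s) \<otimes> z = a \<otimes> (z \<otimes> r) \<oplus> x \<otimes> (z \<otimes> s)"
      using assms calculation \<open>z \<in> carrier R\<close> by algebra
    ultimately show "z \<otimes> y \<in> ?M" "y \<otimes> z \<in> ?M" using \<open>z \<in> carrier R\<close> by auto
  qed
qed

context domain begin

lemma not_val_prufer:
  assumes a: "a \<in> carrier R" and x: "x \<in> carrier R" and x0: "x \<noteq> \<zero>"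
    and H1: "\<And>b c z. b \<in> carrier R \<Longrightarrow> c \<in> carrier R \<Longrightarrow> z \<in> carrier R \<Longrightarrow> b \<otimes> c = x \<otimes> z \<Longrightarrow>
        (\<exists>z'\<in>carrier R. b = x \<otimes> z') \<or> (\<exists>z'\<in>carrier R. c = x \<otimes> z')"
    and H2: "\<And>z. z \<in> carrier R \<Longrightarrow> a \<noteq> x \<otimes> z"
    and H3: "\<And>c z. c \<in> carrier R \<Longrightarrow> z \<in> carrier R \<Longrightarrow> \<one> \<ominus> c \<otimes> a \<noteq> x \<otimes> z"
  shows "\<not> valuation_domain R" "\<not> prufer_domain R"
proof -
  have a0: "a \<noteq> \<zero>" using H2[of \<zero>] x by auto
  show "\<not> valuation_domain R"
  proof
    assume "valuation_domain R"
    then have "a divides x \<or> x divides a" using a x unfolding valuation_domain_def by blast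
    then show False
    proof
      assume "x divides a" then show False using H2 by (auto elim: dividesE)
    next
      assume "a divides x"
      then obtain c where c: "c \<in> carrier R" "x = a \<otimes> c" by (auto elim: dividesE)
      then have "a \<otimes> c = x \<otimes> \<one>" using x by simp
      then have "(\<exists>z'\<in>carrier R. a = x \<otimes> z') \<or> (\<exists>z'\<in>carrier R. c = x \<otimes> z')" using H1[OF a c(1) one_closed] by simp
      then obtain z' where z': "z' \<in> carrier R" "c = x \<otimes> z'" using H2 by blast
      have e: "a \<otimes> (x \<otimes> z') = x" using c(2) z'(2) by metis
      have "x \<otimes> (z' \<otimes> a) = a \<otimes> (x \<otimes> z')" using x z' a by (simp add: m_ac)
      then have "x \<otimes> \<one> = x \<otimes> (z' \<otimes> a)" using e x by simp
      then have "\<one> = z' \<otimes> a" using m_lcancel[OF x0 x one_closed, of "z' \<otimes> a"] z' a by blast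
      then have "\<one> \<ominus> z' \<otimes> a = x \<otimes> \<zero>" using x z' a by (simp add: r_neg minus_eq)
      then show False using H3 z' by blast
    qed
  qed
  show "\<not> prufer_domain R"
  proof
    assume pr: "prufer_domain R"
    have aI: "a \<in> Idl {a, x}" and xI: "x \<in> Idl {a, x}" using genideal_self[of "{a, x}"] a x by auto
    have "Idl {a, x} \<noteq> {\<zero>}" using aI a0 by auto
    then have "invertible_ideal R (Idl {a, x})" using pr a x unfolding prufer_domain_def by auto
    then obtain J d where J: "ideal J R" and d: "d \<in> carrier R" "d \<noteq> \<zero>"
      and e: "ideal_prod R (Idl {a, x}) J = PIdl d" unfolding invertible_ideal_def by blast
    interpret J: ideal J R by (rule J)
    have decomp: "\<exists>j1\<in>J. \<exists>j2\<in>J. y = a \<otimes> j1 \<oplus> x \<otimes> j2" if "y \<in> ideal_prod R (Idl {a, x}) J" for y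
      using that
    proof (induct y rule: ideal_prod.induct)
      case (prod i j)
      then obtain r s where rs: "i = a \<otimes> r \<oplus> x \<otimes> s" "r \<in> carrier R" "s \<in> carrier R"
        using Idl_two_sub[OF a x] by blast
      have jc: "j \<in> carrier R" using prod J.Icarr by blast
      have "i \<otimes> j = a \<otimes> (r \<otimes> j) \<oplus> x \<otimes> (s \<otimes> j)" using rs a x jc by algebra
      moreover have "r \<otimes> j \<in> J" "s \<otimes> j \<in> J" using rs prod J.I_l_closed by auto
      ultimately show ?case by blast
    next
      case (sum s1 s2)
      then obtain j1 j2 k1 k2 where jk: "j1 \<in> J" "j2 \<in> J" "k1 \<in> J" "k2 \<in> J"
        "s1 = a \<otimes> j1 \<oplus> x \<otimes> j2" "s2 = a \<otimes> k1 \<oplus> x \<otimes> k2" by blast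
      have c: "j1 \<in> carrier R" "j2 \<in> carrier R" "k1 \<in> carrier R" "k2 \<in> carrier R" using jk J.Icarr by auto
      have "s1 \<oplus> s2 = a \<otimes> (j1 \<oplus> k1) \<oplus> x \<otimes> (j2 \<oplus> k2)" using jk c a x by algebra
      moreover have "j1 \<oplus> k1 \<in> J" "j2 \<oplus> k2 \<in> J" using jk J.a_closed by auto
      ultimately show ?case by blast
    qed
    have inP: "\<exists>u\<in>carrier R. i \<otimes> j = u \<otimes> d" if "i \<in> Idl {a, x}" "j \<in> J" for i j
    proof -
      have "i \<otimes> j \<in> PIdl d" using ideal_prod.prod[OF that, of R] e by simp
      then show ?thesis unfolding cgenideal_def by blast
    qed
    have "d \<in> PIdl d" using d cgenideal_self by blast
    then obtain j1 j2 where j: "j1 \<in> J" "j2 \<in> J" "d = a \<otimes> j1 \<oplus> x \<otimes> j2" using decomp[of d] e by auto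
    have jc: "j1 \<in> carrier R" "j2 \<in> carrier R" using j J.Icarr by auto
    obtain u1 where u1: "u1 \<in> carrier R" "a \<otimes> j1 = u1 \<otimes> d" using inP[OF aI j(1)] by blast
    obtain u2 where u2: "u2 \<in> carrier R" "x \<otimes> j2 = u2 \<otimes> d" using inP[OF xI j(2)] by blast
    obtain v where v: "v \<in> carrier R" "a \<otimes> j2 = v \<otimes> d" using inP[OF aI j(2)] by blast
    obtain w where w: "w \<in> carrier R" "x \<otimes> j1 = w \<otimes> d" using inP[OF xI j(1)] by blast
    have "\<one> \<otimes> d = (u1 \<oplus> u2) \<otimes> d" using j u1 u2 d by (simp add: l_distr)
    then have u12: "u1 \<oplus> u2 = \<one>" using m_rcancel d u1 u2 by (metis add.m_closed one_closed)
    have "(u1 \<otimes> x) \<otimes> d = (a \<otimes> w) \<otimes> d"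
    proof -
      have "(u1 \<otimes> x) \<otimes> d = x \<otimes> (u1 \<otimes> d)" using u1 x d by (simp add: m_ac)
      also have "\<dots> = x \<otimes> (a \<otimes> j1)" using u1 by simp
      also have "\<dots> = a \<otimes> (x \<otimes> j1)" using a x jc by (simp add: m_ac)
      also have "\<dots> = a \<otimes> (w \<otimes> d)" using w by simp
      also have "\<dots> = (a \<otimes> w) \<otimes> d" using a w d by (simp add: m_ac)
      finally show ?thesis .
    qed
    then have "a \<otimes> w = x \<otimes> u1" using m_rcancel d u1 x a w by (simp add: m_comm)
    then have "(\<exists>z'\<in>carrier R. a = x \<otimes> z') \<or> (\<exists>z'\<in>carrier R. w = x \<otimes> z')" using H1 a w u1 by simp
    then obtain w' where w': "w' \<in> carrier R" "w = x \<otimes> w'" using H2 by blast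
    have "x \<otimes> u1 = x \<otimes> (a \<otimes> w')" using \<open>a \<otimes> w = x \<otimes> u1\<close> w' a x by (simp add: m_lcomm)
    then have u1e: "u1 = a \<otimes> w'" using m_lcancel x0 x u1 a w' by simp
    have "(u2 \<otimes> a) \<otimes> d = (x \<otimes> v) \<otimes> d"
    proof -
      have "(u2 \<otimes> a) \<otimes> d = a \<otimes> (u2 \<otimes> d)" using u2 a d by (simp add: m_ac)
      also have "\<dots> = a \<otimes> (x \<otimes> j2)" using u2 by simp
      also have "\<dots> = x \<otimes> (a \<otimes> j2)" using a x jc by (simp add: m_ac)
      also have "\<dots> = x \<otimes> (v \<otimes> d)" using v by simp
      also have "\<dots> = (x \<otimes> v) \<otimes> d" using x v d by (simp add: m_ac)
      finally show ?thesis .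
    qed
    then have "u2 \<otimes> a = x \<otimes> v" using m_rcancel d u2 x a v by simp
    moreover have "u2 = \<one> \<ominus> w' \<otimes> a"
    proof -
      have "u2 = (u1 \<oplus> u2) \<ominus> u1" using u1 u2 by algebra
      then show ?thesis using u12 u1e a w' by (simp add: m_comm)
    qed
    ultimately have "(\<one> \<ominus> w' \<otimes> a) \<otimes> a = x \<otimes> v" by simp
    then have "(\<exists>z'\<in>carrier R. \<one> \<ominus> w' \<otimes> a = x \<otimes> z') \<or> (\<exists>z'\<in>carrier R. a = x \<otimes> z')"
      using H1 a w' v by simp
    then show False using H2 H3 w' by blast
  qed
qed

end

lemma (in ring) finsum_ideal:
  assumes I: "ideal I R" and F: "finite F" and f: "\<And>k. k \<in> F \<Longrightarrow> f k \<in> I"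
  shows "finsum R f F \<in> I"
  using F f
proof (induct F rule: finite_induct)
  case empty then show ?case using I by (simp add: additive_subgroup.zero_closed ideal.axioms(1))
next
  case (insert k F)
  have fc: "f \<in> F \<rightarrow> carrier R" "f k \<in> carrier R" using insert.prems ideal.Icarr[OF I] by auto
  have "finsum R f (insert k F) = f k \<oplus> finsum R f F" using insert fc by simp
  then show ?case using insert I by (simp add: additive_subgroup.a_closed ideal.axioms(1))
qed

definition eps0 :: "('a, 'm) ring_scheme \<Rightarrow> ((nat \<Rightarrow> 'a) \<times> (nat \<Rightarrow> 'a)) set \<Rightarrow> 'a" where
  "eps0 R F = coeff (UP R) (fst (SOME x. x \<in> F)) 0"

context UP_cring begin

lemma coeff_eq: "f \<in> carrier P \<Longrightarrow> coeff P f n = f n" by (simp add: P_def UP_def)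

lemma coeff_mult_0:
  assumes "p \<in> carrier P" "q \<in> carrier P"
  shows "coeff P (p \<otimes>\<^bsub>P\<^esub> q) 0 = coeff P p 0 \<otimes> coeff P q 0"
  using assms by simp

lemma polyA_iff: "s \<in> polyA R \<longleftrightarrow> s \<in> carrier P \<and> coeff P s 0 = \<one>"
  by (simp add: polyA_def P_def)

lemma polyA_setup: "loc_setup P (polyA R)"
proof (intro loc_setup.intro loc_setup_axioms.intro)
  show "cring P" by (rule UP_cring)
  show "polyA R \<subseteq> carrier P" by (auto simp: polyA_iff)
  show "\<one>\<^bsub>P\<^esub> \<in> polyA R" by (simp add: polyA_iff)
  fix s t assume "s \<in> polyA R" "t \<in> polyA R"
  then show "s \<otimes>\<^bsub>P\<^esub> t \<in> polyA R" by (simp add: polyA_iff coeff_mult_0)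
qed

end

sublocale UP_cring \<subseteq> AS: loc_setup P "polyA R" by (rule polyA_setup)

context UP_cring begin

lemma RXA_eq: "RXA R = localization P (polyA R)" by (simp add: RXA_def P_def)

lemma T_cring: "cring (localization P (polyA R))" by (rule AS.L_cring)

lemma eps_frac:
  assumes f: "f \<in> carrier P" and s: "s \<in> polyA R"
  shows "eps0 R (loc_frac P (polyA R) f s) = coeff P f 0"
proof -
  let ?x = "SOME x. x \<in> loc_frac P (polyA R) f s"
  have "?x \<in> loc_frac P (polyA R) f s" using AS.self_mem[OF f s] by (rule someI)
  moreover obtain g t where gt: "?x = (g, t)" by (cases ?x)
  ultimately have m: "(g, t) \<in> loc_frac P (polyA R) f s" by simp
  have e: "loc_frac P (polyA R) g t = loc_frac P (polyA R) f s" and g: "g \<in> carrier P" and t: "t \<in> polyA R"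
    using AS.mem_frac_eq[OF m] by auto
  obtain u where u: "u \<in> polyA R" "u \<otimes>\<^bsub>P\<^esub> (g \<otimes>\<^bsub>P\<^esub> s) = u \<otimes>\<^bsub>P\<^esub> (f \<otimes>\<^bsub>P\<^esub> t)"
    using AS.frac_eq[OF g t f s] e by blast
  have "coeff P (u \<otimes>\<^bsub>P\<^esub> (g \<otimes>\<^bsub>P\<^esub> s)) 0 = coeff P (u \<otimes>\<^bsub>P\<^esub> (f \<otimes>\<^bsub>P\<^esub> t)) 0" using u by simp
  then have "coeff P g 0 = coeff P f 0"
    using u(1) s t f g by (simp add: coeff_mult_0 polyA_iff)
  then show ?thesis unfolding eps0_def using gt by (simp add: P_def)
qed

lemma eps_hom: "eps0 R \<in> ring_hom (localization P (polyA R)) R"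
proof (rule ring_hom_memI)
  fix x assume "x \<in> carrier (localization P (polyA R))"
  then show "eps0 R x \<in> carrier R" by (elim AS.carr_E) (simp add: eps_frac)
next
  fix x y assume "x \<in> carrier (localization P (polyA R))" "y \<in> carrier (localization P (polyA R))"
  then show "eps0 R (x \<otimes>\<^bsub>localization P (polyA R)\<^esub> y) = eps0 R x \<otimes> eps0 R y"
    "eps0 R (x \<oplus>\<^bsub>localization P (polyA R)\<^esub> y) = eps0 R x \<oplus> eps0 R y"
    by (elim AS.carr_E; simp add: AS.L_mult AS.L_add eps_frac AS.mult_S AS.S_carr polyA_iff)+
next
  show "eps0 R \<one>\<^bsub>localization P (polyA R)\<^esub> = \<one>"
    by (simp add: AS.L_one eps_frac AS.one_S)
qed

lemma eps_hom_ring: "ring_hom_ring (localization P (polyA R)) R (eps0 R)"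
  by (rule ring_hom_ringI2[OF cring.axioms(1)[OF T_cring] R.ring_axioms eps_hom])

definition Xp where "Xp = monom P \<one> 1"

lemma Xp_closed: "Xp \<in> carrier P" by (simp add: Xp_def)

lemma coeff_Xp_mult:
  assumes g: "g \<in> carrier P"
  shows "coeff P (Xp \<otimes>\<^bsub>P\<^esub> g) 0 = \<zero>" "coeff P (Xp \<otimes>\<^bsub>P\<^esub> g) (Suc n) = coeff P g n"
proof -
  show "coeff P (Xp \<otimes>\<^bsub>P\<^esub> g) 0 = \<zero>" using g by (simp add: coeff_mult_0 Xp_def)
  have "coeff P (monom P \<one> 1 \<otimes>\<^bsub>P\<^esub> g) (n + 1) = \<one> \<otimes> coeff P g n"
    by (rule coeff_monom_mult[OF R.one_closed g])
  then show "coeff P (Xp \<otimes>\<^bsub>P\<^esub> g) (Suc n) = coeff P g n" using g by (simp add: Xp_def)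
qed

definition sh :: "(nat \<Rightarrow> 'a) \<Rightarrow> (nat \<Rightarrow> 'a)" where "sh f = (\<lambda>n. f (Suc n))"

lemma sh_closed:
  assumes f: "f \<in> carrier P" shows "sh f \<in> carrier P"
proof -
  have fu: "f \<in> up R" using f by (simp add: P_def UP_def)
  then obtain N where N: "bound \<zero> N f" by blast
  have "bound \<zero> N (sh f)" using N unfolding bound_def sh_def by simp
  moreover have "\<And>n. sh f n \<in> carrier R" using fu unfolding sh_def by blast
  ultimately have "sh f \<in> up R" by blast
  then show ?thesis by (simp add: P_def UP_def)
qed

lemma coeff_sh: "f \<in> carrier P \<Longrightarrow> coeff P (sh f) n = coeff P f (Suc n)"
  using sh_closed by (simp add: coeff_eq sh_def)

lemma sh_decomp:
  assumes f: "f \<in> carrier P"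
  shows "f = monom P (coeff P f 0) 0 \<oplus>\<^bsub>P\<^esub> Xp \<otimes>\<^bsub>P\<^esub> sh f"
proof (rule up_eqI)
  fix n
  show "coeff P f n = coeff P (monom P (coeff P f 0) 0 \<oplus>\<^bsub>P\<^esub> Xp \<otimes>\<^bsub>P\<^esub> sh f) n"
    using f sh_closed[OF f] Xp_closed
    by (cases n) (simp_all add: coeff_Xp_mult[OF sh_closed[OF f]] coeff_sh del: coeff_mult)
qed (use f sh_closed[OF f] Xp_closed in auto)

lemma sh_bound:
  assumes "f \<in> carrier P" "\<forall>m\<ge>Suc N. coeff P f m = \<zero>"
  shows "\<forall>m\<ge>N. coeff P (sh f) m = \<zero>"
  using assms by (simp add: coeff_sh)

lemma eps_lfrac: "f \<in> carrier P \<Longrightarrow> eps0 R (loc_frac P (polyA R) f \<one>\<^bsub>P\<^esub>) = coeff P f 0"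
  by (simp add: eps_frac AS.one_S)

end

lemma (in ideal) quot_carrier:
  assumes "y \<in> carrier (R Quot I)" obtains Y where "Y \<in> carrier R" "y = I +> Y"
  using assms unfolding FactRing_def A_RCOSETS_def' by auto

lemma (in ideal) quot_zero: "\<zero>\<^bsub>R Quot I\<^esub> = I" by (simp add: FactRing_def)

lemma (in ideal) cls_zero_iff:
  assumes "Y \<in> carrier R" shows "I +> Y = I \<longleftrightarrow> Y \<in> I"
proof
  assume "I +> Y = I" then show "Y \<in> I" using rcos_const_imp_mem assms by blast
next
  assume "Y \<in> I"
  then show "I +> Y = I" using a_rcos_zero[OF is_ideal] by simp
qed

lemma hom_unit:
  assumes h: "h \<in> ring_hom A B" and A: "monoid A" and u: "u \<in> Units A"
  shows "h u \<in> Units B"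
proof -
  obtain v where v: "v \<in> carrier A" "v \<otimes>\<^bsub>A\<^esub> u = \<one>\<^bsub>A\<^esub>" "u \<otimes>\<^bsub>A\<^esub> v = \<one>\<^bsub>A\<^esub>" "u \<in> carrier A"
    using u unfolding Units_def by blast
  have "h v \<otimes>\<^bsub>B\<^esub> h u = \<one>\<^bsub>B\<^esub>" "h u \<otimes>\<^bsub>B\<^esub> h v = \<one>\<^bsub>B\<^esub>"
    using v ring_hom_mult[OF h, of v u] ring_hom_mult[OF h, of u v] ring_hom_one[OF h] by simp_all
  moreover have "h u \<in> carrier B" "h v \<in> carrier B" using v ring_hom_closed[OF h] by simp_all
  ultimately show ?thesis unfolding Units_def by blast
qed


context UP_cring begin

definition iota where "iota c = loc_frac P (polyA R) (monom P c 0) \<one>\<^bsub>P\<^esub>"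

lemma iota_hom: "iota \<in> ring_hom R (localization P (polyA R))"
proof -
  have "(\<lambda>a. loc_frac P (polyA R) a \<one>\<^bsub>P\<^esub>) \<circ> (\<lambda>a. monom P a 0) \<in> ring_hom R (localization P (polyA R))"
    by (rule ring_hom_trans[OF const_ring_hom AS.lfrac_hom])
  then show ?thesis unfolding iota_def o_def by simp
qed

lemma iota_hom_ring: "ring_hom_ring R (localization P (polyA R)) iota"
  by (rule ring_hom_ringI2[OF R.ring_axioms cring.axioms(1)[OF T_cring] iota_hom])

lemma max_inv:
  assumes M: "maximalideal p R" and c: "c \<in> carrier R" "c \<notin> p"
  shows "\<exists>d\<in>carrier R. d \<otimes> c \<ominus> \<one> \<in> p"
proof -
  interpret M: maximalideal p R by (rule M)
  let ?J = "set_add R p (PIdl c)"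
  have J: "ideal ?J R" by (rule R.add_ideals[OF M.is_ideal R.cgenideal_ideal[OF c(1)]])
  have "p \<subseteq> ?J"
  proof
    fix y assume y: "y \<in> p"
    have "\<zero> \<in> PIdl c" using R.cgenideal_ideal[OF c(1)] by (simp add: additive_subgroup.zero_closed ideal.axioms(1))
    moreover have "y = y \<oplus> \<zero>" using y M.Icarr by simp
    ultimately show "y \<in> ?J" using y unfolding set_add_def' by blast
  qed
  moreover have "c \<in> ?J"
  proof -
    have "c \<in> PIdl c" using R.cgenideal_self[OF c(1)] .
    moreover have "c = \<zero> \<oplus> c" using c by simp
    ultimately show ?thesis using M.zero_closed unfolding set_add_def' by blast
  qed
  ultimately have "?J = carrier R" using M.I_maximal[OF J] ideal.Icarr[OF J] c by blast
  then have "\<one> \<in> ?J" by simp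
  then obtain y k where yk: "y \<in> p" "k \<in> PIdl c" "\<one> = y \<oplus> k" unfolding set_add_def' by blast
  then obtain d where d: "d \<in> carrier R" "k = d \<otimes> c" unfolding cgenideal_def by blast
  have yc: "y \<in> carrier R" using yk M.Icarr by blast
  have "d \<otimes> c \<ominus> \<one> = \<ominus> y" using yk(3) d c yc by algebra
  moreover have "\<ominus> y \<in> p" using yk(1) M.a_inv_closed by blast
  ultimately show ?thesis using d(1) by metis
qed

lemma zd_nf:
  assumes zd: "zero_dimensional R" and Pr: "primeideal Q (localization P (polyA R))"
  shows "principal_domain (localization P (polyA R) Quot Q) \<and> valuation_domain (localization P (polyA R) Quot Q)
    \<and> bezout_domain (localization P (polyA R) Quot Q) \<and> prufer_domain (localization P (polyA R) Quot Q)"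
proof -
  interpret T: cring "localization P (polyA R)" by (rule T_cring)
  interpret Qi: primeideal Q "localization P (polyA R)" by (rule Pr)
  interpret D: domain "localization P (polyA R) Quot Q" by (rule Qi.quotient_is_domain)
  define cls where "cls = (+>\<^bsub>localization P (polyA R)\<^esub>) Q"
  have cls_hom: "ring_hom_ring (localization P (polyA R)) (localization P (polyA R) Quot Q) cls"
    unfolding cls_def by (rule Qi.rcos_ring_hom_ring)
  interpret C: ring_hom_ring "localization P (polyA R)" "localization P (polyA R) Quot Q" cls by (rule cls_hom)
  define h where "h = cls \<circ> (\<lambda>f. loc_frac P (polyA R) f \<one>\<^bsub>P\<^esub>)"
  have h_hom: "h \<in> ring_hom P (localization P (polyA R) Quot Q)"
    unfolding h_def by (rule ring_hom_trans[OF AS.lfrac_hom C.homh])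
  interpret H: ring_hom_ring P "localization P (polyA R) Quot Q" h
    by (rule ring_hom_ringI2[OF P.ring_axioms D.ring_axioms h_hom])
  define p where "p = {c \<in> carrier R. iota c \<in> Q}"
  have p_prime: "primeideal p R" unfolding p_def
    by (rule ring_hom_ring.primeideal_vimage[OF iota_hom_ring R.is_cring Pr])
  have p_max: "maximalideal p R" using zd p_prime unfolding zero_dimensional_def by blast
  have hconst: "h (monom P c 0) = cls (iota c)" for c unfolding h_def iota_def by simp
  have hp: "h (monom P c 0) = \<zero>\<^bsub>localization P (polyA R) Quot Q\<^esub>" if "c \<in> p" for c
  proof -
    have "iota c \<in> Q" "c \<in> carrier R" using that unfolding p_def by auto
    then show ?thesis unfolding hconst cls_def Qi.quot_zero
      using Qi.cls_zero_iff ring_hom_closed[OF iota_hom] by blast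
  qed
  define x where "x = h Xp"
  have xc: "x \<in> carrier (localization P (polyA R) Quot Q)" unfolding x_def using Xp_closed by simp
  define NF where "NF z \<longleftrightarrow> z = \<zero>\<^bsub>localization P (polyA R) Quot Q\<^esub> \<or>
      (\<exists>u\<in>Units (localization P (polyA R) Quot Q). \<exists>n::nat. z = u \<otimes>\<^bsub>localization P (polyA R) Quot Q\<^esub> x [^]\<^bsub>localization P (polyA R) Quot Q\<^esub> n)" for z
  have key: "\<forall>f\<in>carrier P. (\<forall>m\<ge>N. coeff P f m = \<zero>) \<longrightarrow> NF (h f)" for N
  proof (induct N)
    case 0
    show ?case
    proof (intro ballI impI)
      fix f assume f: "f \<in> carrier P" and b: "\<forall>m\<ge>0. coeff P f m = \<zero>"
      have "f = \<zero>\<^bsub>P\<^esub>" by (rule up_eqI) (use f b in auto)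
      then show "NF (h f)" unfolding NF_def by simp
    qed
  next
    case (Suc N)
    show ?case
    proof (intro ballI impI)
      fix f assume f: "f \<in> carrier P" and b: "\<forall>m\<ge>Suc N. coeff P f m = \<zero>"
      define c where "c = coeff P f 0"
      have cc: "c \<in> carrier R" unfolding c_def using f by simp
      have g: "sh f \<in> carrier P" using sh_closed[OF f] .
      have hf: "h f = h (monom P c 0) \<oplus>\<^bsub>localization P (polyA R) Quot Q\<^esub> x \<otimes>\<^bsub>localization P (polyA R) Quot Q\<^esub> h (sh f)"
      proof -
        have "h f = h (monom P c 0 \<oplus>\<^bsub>P\<^esub> Xp \<otimes>\<^bsub>P\<^esub> sh f)" using sh_decomp[OF f] unfolding c_def by simp
        then show ?thesis using cc g Xp_closed unfolding x_def by simp
      qed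
      have hgc: "h (sh f) \<in> carrier (localization P (polyA R) Quot Q)" using g by simp
      show "NF (h f)"
      proof (cases "c \<in> p")
        case True
        then have hf2: "h f = x \<otimes>\<^bsub>localization P (polyA R) Quot Q\<^esub> h (sh f)"
          using hf hp xc hgc by simp
        have "\<forall>m\<ge>N. coeff P (sh f) m = \<zero>" using sh_bound[OF f b] .
        then have "h (sh f) = \<zero>\<^bsub>localization P (polyA R) Quot Q\<^esub> \<or>
          (\<exists>u\<in>Units (localization P (polyA R) Quot Q). \<exists>n::nat. h (sh f) = u \<otimes>\<^bsub>localization P (polyA R) Quot Q\<^esub> x [^]\<^bsub>localization P (polyA R) Quot Q\<^esub> n)"
          using Suc g unfolding NF_def by blast
        then show ?thesis
        proof
          assume "h (sh f) = \<zero>\<^bsub>localization P (polyA R) Quot Q\<^esub>"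
          then show ?thesis unfolding NF_def using hf2 xc by simp
        next
          assume "\<exists>u\<in>Units (localization P (polyA R) Quot Q). \<exists>n::nat. h (sh f) = u \<otimes>\<^bsub>localization P (polyA R) Quot Q\<^esub> x [^]\<^bsub>localization P (polyA R) Quot Q\<^esub> n"
          then obtain u and n :: nat where u: "u \<in> Units (localization P (polyA R) Quot Q)"
            "h (sh f) = u \<otimes>\<^bsub>localization P (polyA R) Quot Q\<^esub> x [^]\<^bsub>localization P (polyA R) Quot Q\<^esub> n" by blast
          have uc: "u \<in> carrier (localization P (polyA R) Quot Q)" using u by blast
          have "h f = u \<otimes>\<^bsub>localization P (polyA R) Quot Q\<^esub> x [^]\<^bsub>localization P (polyA R) Quot Q\<^esub> (Suc n)"
            using hf2 u(2) uc xc by (simp add: D.m_ac)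
          then show ?thesis unfolding NF_def using u(1) by blast
        qed
      next
        case False
        obtain d where d: "d \<in> carrier R" "d \<otimes> c \<ominus> \<one> \<in> p" using max_inv[OF p_max cc False] by blast
        define k where "k = monom P d 0 \<otimes>\<^bsub>P\<^esub> f \<ominus>\<^bsub>P\<^esub> monom P (d \<otimes> c \<ominus> \<one>) 0"
        have kc: "k \<in> carrier P" unfolding k_def using d cc f by simp
        have "coeff P k 0 = d \<otimes> c \<ominus> (d \<otimes> c \<ominus> \<one>)" unfolding k_def using d cc f
          by (simp add: coeff_mult_0 c_def)
        also have "\<dots> = \<one>" using d cc by algebra
        finally have kA: "k \<in> polyA R" using kc by (simp add: polyA_iff)
        have "loc_frac P (polyA R) k \<one>\<^bsub>P\<^esub> \<in> Units (localization P (polyA R))"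
          using AS.S_unit(1)[OF kA] .
        then have hk: "h k \<in> Units (localization P (polyA R) Quot Q)"
          unfolding h_def using hom_unit[OF C.homh T.monoid_axioms] by simp
        have "h k = h (monom P d 0) \<otimes>\<^bsub>localization P (polyA R) Quot Q\<^esub> h f \<ominus>\<^bsub>localization P (polyA R) Quot Q\<^esub> h (monom P (d \<otimes> c \<ominus> \<one>) 0)"
          unfolding k_def using d cc f by (simp add: a_minus_def)
        also have "\<dots> = h (monom P d 0) \<otimes>\<^bsub>localization P (polyA R) Quot Q\<^esub> h f"
          using hp[OF d(2)] d f by (simp add: a_minus_def)
        finally have "h f \<otimes>\<^bsub>localization P (polyA R) Quot Q\<^esub> h (monom P d 0) \<in> Units (localization P (polyA R) Quot Q)"
          using hk d f by (simp add: D.m_comm)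
        then have "h f \<in> Units (localization P (polyA R) Quot Q)"
          by (rule D.unit_factor) (use d f in simp_all)
        moreover have "h f = h f \<otimes>\<^bsub>localization P (polyA R) Quot Q\<^esub> x [^]\<^bsub>localization P (polyA R) Quot Q\<^esub> (0::nat)"
          using f H.hom_closed[OF f] by simp
        ultimately show ?thesis unfolding NF_def by blast
      qed
    qed
  qed
  have keyall: "NF (h f)"
    if f: "f \<in> carrier P" for f
  proof -
    have "f \<in> up R" using f by (simp add: P_def UP_def)
    then obtain N where "bound \<zero> N f" by blast
    then have "\<forall>m\<ge>Suc N. coeff P f m = \<zero>" using f by (simp add: coeff_eq bound_def)
    then show ?thesis using key[of "Suc N"] f by blast
  qed
  have nf: "y = \<zero>\<^bsub>localization P (polyA R) Quot Q\<^esub> \<or>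
      (\<exists>u\<in>Units (localization P (polyA R) Quot Q). \<exists>n::nat. y = u \<otimes>\<^bsub>localization P (polyA R) Quot Q\<^esub> x [^]\<^bsub>localization P (polyA R) Quot Q\<^esub> n)"
    if y: "y \<in> carrier (localization P (polyA R) Quot Q)" for y
  proof -
    obtain F where F: "F \<in> carrier (localization P (polyA R))" "y = cls F"
      using Qi.quot_carrier[OF y] unfolding cls_def by blast
    obtain f s where fs: "F = loc_frac P (polyA R) f s" "f \<in> carrier P" "s \<in> polyA R"
      using F(1) by (rule AS.carr_E)
    have w: "cls (loc_frac P (polyA R) \<one>\<^bsub>P\<^esub> s) \<in> Units (localization P (polyA R) Quot Q)"
      using hom_unit[OF C.homh T.monoid_axioms AS.S_unit(2)[OF fs(3)]] .
    have wc: "cls (loc_frac P (polyA R) \<one>\<^bsub>P\<^esub> s) \<in> carrier (localization P (polyA R) Quot Q)"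
      using w by blast
    have ye: "y = h f \<otimes>\<^bsub>localization P (polyA R) Quot Q\<^esub> cls (loc_frac P (polyA R) \<one>\<^bsub>P\<^esub> s)"
      using F(2) fs AS.frac_decomp[OF fs(2) fs(3)] AS.carr_frac AS.one_S unfolding h_def by simp
    from keyall[OF fs(2), unfolded NF_def] show ?thesis
    proof
      assume "h f = \<zero>\<^bsub>localization P (polyA R) Quot Q\<^esub>"
      then show ?thesis using ye wc by simp
    next
      assume "\<exists>u\<in>Units (localization P (polyA R) Quot Q). \<exists>n::nat. h f = u \<otimes>\<^bsub>localization P (polyA R) Quot Q\<^esub> x [^]\<^bsub>localization P (polyA R) Quot Q\<^esub> n"
      then obtain u and n :: nat where u: "u \<in> Units (localization P (polyA R) Quot Q)"
        "h f = u \<otimes>\<^bsub>localization P (polyA R) Quot Q\<^esub> x [^]\<^bsub>localization P (polyA R) Quot Q\<^esub> n" by blast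
      have uc: "u \<in> carrier (localization P (polyA R) Quot Q)" using u by blast
      have "y = (u \<otimes>\<^bsub>localization P (polyA R) Quot Q\<^esub> cls (loc_frac P (polyA R) \<one>\<^bsub>P\<^esub> s)) \<otimes>\<^bsub>localization P (polyA R) Quot Q\<^esub> x [^]\<^bsub>localization P (polyA R) Quot Q\<^esub> n"
        using ye u(2) uc wc xc by (simp add: D.m_ac)
      moreover have "u \<otimes>\<^bsub>localization P (polyA R) Quot Q\<^esub> cls (loc_frac P (polyA R) \<one>\<^bsub>P\<^esub> s) \<in> Units (localization P (polyA R) Quot Q)"
        using u(1) w by simp
      ultimately show ?thesis by blast
    qed
  qed
  have pid: "principal_domain (localization P (polyA R) Quot Q)" by (rule D.nf_pid[OF xc nf])
  have val: "valuation_domain (localization P (polyA R) Quot Q)" by (rule D.nf_valuation[OF xc nf])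
  have bez: "bezout_domain (localization P (polyA R) Quot Q)" by (rule D.pid_bezout[OF pid])
  have pru: "prufer_domain (localization P (polyA R) Quot Q)" by (rule D.bezout_prufer[OF bez])
  show ?thesis using pid val bez pru by blast
qed

end

context UP_cring begin

definition pX where "pX p = {f \<in> carrier P. \<forall>n. coeff P f n \<in> p}"

lemma pX_ideal:
  assumes I: "ideal p R" shows "ideal (pX p) P"
proof -
  interpret I: ideal p R by (rule I)
  show ?thesis
  proof (rule P.idealI2)
    show "pX p \<subseteq> carrier P" unfolding pX_def by auto
    show "\<zero>\<^bsub>P\<^esub> \<in> pX p" unfolding pX_def by simp
  next
    fix f g assume "f \<in> pX p" "g \<in> pX p"
    then show "f \<oplus>\<^bsub>P\<^esub> g \<in> pX p" unfolding pX_def by (simp add: I.a_closed)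
  next
    fix f assume "f \<in> pX p"
    then show "\<ominus>\<^bsub>P\<^esub> f \<in> pX p" unfolding pX_def by (simp add: I.a_inv_closed)
  next
    fix f g assume f: "f \<in> pX p" and g: "g \<in> carrier P"
    have fc: "f \<in> carrier P" using f unfolding pX_def by simp
    have "coeff P (g \<otimes>\<^bsub>P\<^esub> f) n \<in> p" for n
      using fc g by (simp, intro R.finsum_ideal[OF I]) (use f I.I_l_closed pX_def in auto)
    then show "g \<otimes>\<^bsub>P\<^esub> f \<in> pX p" using fc g unfolding pX_def by simp
    have "coeff P (f \<otimes>\<^bsub>P\<^esub> g) n \<in> p" for n
      using fc g by (simp, intro R.finsum_ideal[OF I]) (use f I.I_r_closed pX_def in auto)
    then show "f \<otimes>\<^bsub>P\<^esub> g \<in> pX p" using fc g unfolding pX_def by simp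
  qed
qed

lemma pX_prime:
  assumes Pr: "primeideal p R" shows "primeideal (pX p) P"
proof -
  interpret I: primeideal p R by (rule Pr)
  have one_notin: "\<one> \<notin> p" using I.I_notcarr I.one_imp_carrier by blast
  show ?thesis
  proof (rule primeidealI[OF pX_ideal[OF I.is_ideal] P.is_cring])
    show "carrier P \<noteq> pX p"
    proof
      assume "carrier P = pX p"
      then have "\<one>\<^bsub>P\<^esub> \<in> pX p" using UP_one_closed by simp
      then have "coeff P \<one>\<^bsub>P\<^esub> 0 \<in> p" unfolding pX_def by blast
      then show False using one_notin by simp
    qed
  next
    fix f g assume f: "f \<in> carrier P" and g: "g \<in> carrier P" and fg: "f \<otimes>\<^bsub>P\<^esub> g \<in> pX p"
    show "f \<in> pX p \<or> g \<in> pX p"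
    proof (rule ccontr)
      assume "\<not> (f \<in> pX p \<or> g \<in> pX p)"
      then have ex: "\<exists>i. coeff P f i \<notin> p" "\<exists>j. coeff P g j \<notin> p" using f g unfolding pX_def by auto
      define i0 where "i0 = (LEAST i. coeff P f i \<notin> p)"
      define j0 where "j0 = (LEAST j. coeff P g j \<notin> p)"
      have i0: "coeff P f i0 \<notin> p" unfolding i0_def by (rule LeastI_ex[OF ex(1)])
      have j0: "coeff P g j0 \<notin> p" unfolding j0_def by (rule LeastI_ex[OF ex(2)])
      have below_i: "coeff P f k \<in> p" if "k < i0" for k using not_less_Least[OF that[unfolded i0_def]] by blast
      have below_j: "coeff P g k \<in> p" if "k < j0" for k using not_less_Least[OF that[unfolded j0_def]] by blast
      define t where "t = (\<lambda>k. coeff P f k \<otimes> coeff P g (i0 + j0 - k))"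
      have tc: "t \<in> ({..i0 + j0} - {i0}) \<rightarrow> carrier R" unfolding t_def using f g by auto
      have t0c: "t i0 \<in> carrier R" unfolding t_def using f g by auto
      have rest: "finsum R t ({..i0 + j0} - {i0}) \<in> p"
      proof (rule R.finsum_ideal[OF I.is_ideal])
        show "finite ({..i0 + j0} - {i0})" by simp
        fix k assume k: "k \<in> {..i0 + j0} - {i0}"
        show "t k \<in> p"
        proof (cases "k < i0")
          case True then show ?thesis unfolding t_def using below_i g f by (simp add: I.I_r_closed)
        next
          case False
          then have "i0 + j0 - k < j0" using k by auto
          then show ?thesis unfolding t_def using below_j g f by (simp add: I.I_l_closed)
        qed
      qed
      have "coeff P (f \<otimes>\<^bsub>P\<^esub> g) (i0 + j0) = t i0 \<oplus> finsum R t ({..i0 + j0} - {i0})"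
      proof -
        define A where "A = {..i0 + j0} - {i0}"
        have eq: "{..i0 + j0} = insert i0 A" unfolding A_def by auto
        have "coeff P (f \<otimes>\<^bsub>P\<^esub> g) (i0 + j0) = finsum R t {..i0 + j0}" using f g unfolding t_def by simp
        also have "\<dots> = finsum R t (insert i0 A)" unfolding eq ..
        also have "\<dots> = t i0 \<oplus> finsum R t A"
          by (rule R.finsum_insert) (use tc t0c in \<open>auto simp: A_def\<close>)
        finally show ?thesis unfolding A_def .
      qed
      moreover have "coeff P (f \<otimes>\<^bsub>P\<^esub> g) (i0 + j0) \<in> p" using fg unfolding pX_def by simp
      ultimately have "t i0 \<oplus> finsum R t ({..i0 + j0} - {i0}) \<in> p" by simp
      moreover have "t i0 = (t i0 \<oplus> finsum R t ({..i0 + j0} - {i0})) \<ominus> finsum R t ({..i0 + j0} - {i0})"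
        using t0c R.finsum_closed[OF tc] by algebra
      ultimately have "t i0 \<in> p" using rest by (metis I.a_closed I.a_inv_closed a_minus_def)
      then have "coeff P f i0 \<in> p \<or> coeff P g j0 \<in> p" unfolding t_def
        using I.I_prime[OF coeff_closed[OF f] coeff_closed[OF g]] by simp
      then show False using i0 j0 by blast
    qed
  qed
qed

end

context UP_cring begin

lemma nzd_bad:
  assumes nzd: "\<not> zero_dimensional R"
  shows "\<exists>Q. primeideal Q (localization P (polyA R)) \<and>
    \<not> valuation_domain (localization P (polyA R) Quot Q) \<and> \<not> prufer_domain (localization P (polyA R) Quot Q)"
proof -
  obtain p where Pr: "primeideal p R" and nm: "\<not> maximalideal p R"
    using nzd unfolding zero_dimensional_def by blast
  interpret I: primeideal p R by (rule Pr)
  have "\<exists>J. ideal J R \<and> p \<subseteq> J \<and> J \<subseteq> carrier R \<and> J \<noteq> p \<and> J \<noteq> carrier R"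
  proof (rule ccontr)
    assume "\<not> ?thesis"
    then have "maximalideal p R"
      by (intro maximalidealI[OF I.is_ideal I.I_notcarr]) blast
    then show False using nm by blast
  qed
  then obtain J where J: "ideal J R" "p \<subseteq> J" "J \<noteq> p" "J \<noteq> carrier R" by blast
  interpret JI: ideal J R by (rule J(1))
  obtain a where a: "a \<in> J" "a \<notin> p" using J(2,3) by blast
  have ac: "a \<in> carrier R" using a JI.Icarr by blast
  have one_notJ: "\<one> \<notin> J" using J(4) JI.one_imp_carrier by blast
  have one_notp: "\<one> \<notin> p" using one_notJ J(2) by blast
  have disj: "pX p \<inter> polyA R = {}"
  proof (rule ccontr)
    assume "pX p \<inter> polyA R \<noteq> {}"
    then obtain f where f: "f \<in> pX p" "f \<in> polyA R" by blast
    have "coeff P f 0 \<in> p" using f(1) unfolding pX_def by blast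
    moreover have "coeff P f 0 = \<one>" using f(2) by (simp add: polyA_iff)
    ultimately have "\<one> \<in> p" by simp
    then show False using one_notp by blast
  qed
  define Q where "Q = loc_ext P (polyA R) (pX p)"
  have QP: "primeideal Q (localization P (polyA R))"
    unfolding Q_def by (rule AS.ext_prime[OF pX_prime[OF Pr] disj])
  have Qmem: "loc_frac P (polyA R) f s \<in> Q \<longleftrightarrow> f \<in> pX p" if "f \<in> carrier P" "s \<in> polyA R" for f s
    unfolding Q_def by (rule AS.ext_mem_iff[OF pX_prime[OF Pr] disj that])
  interpret T: cring "localization P (polyA R)" by (rule T_cring)
  interpret Qi: primeideal Q "localization P (polyA R)" by (rule QP)
  define D where "D = localization P (polyA R) Quot Q"
  have Ddom: "domain D" unfolding D_def by (rule Qi.quotient_is_domain)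
  interpret D: domain D by (rule Ddom)
  define cls where "cls = (+>\<^bsub>localization P (polyA R)\<^esub>) Q"
  have cls_hom: "ring_hom_ring (localization P (polyA R)) D cls"
    unfolding cls_def D_def by (rule Qi.rcos_ring_hom_ring)
  interpret C: ring_hom_ring "localization P (polyA R)" D cls by (rule cls_hom)
  interpret E: ring_hom_ring "localization P (polyA R)" R "eps0 R" by (rule eps_hom_ring)
  interpret Lf: ring_hom_ring P "localization P (polyA R)" "\<lambda>f. loc_frac P (polyA R) f \<one>\<^bsub>P\<^esub>"
    by (rule AS.lfrac_hom_ring)
  have cls0: "cls F = \<zero>\<^bsub>D\<^esub> \<longleftrightarrow> F \<in> Q" if "F \<in> carrier (localization P (polyA R))" for F
    unfolding cls_def D_def Qi.quot_zero using Qi.cls_zero_iff[OF that] .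
  have Dcarr: "\<exists>F\<in>carrier (localization P (polyA R)). y = cls F" if "y \<in> carrier D" for y
    using Qi.quot_carrier[of y] that unfolding D_def cls_def by blast
  have epsQ: "eps0 R F \<in> p" if FQ: "F \<in> Q" for F
  proof -
    obtain f s where "F = loc_frac P (polyA R) f s" "f \<in> pX p" "s \<in> polyA R"
      using FQ unfolding Q_def loc_ext_def by blast
    then show ?thesis using eps_frac unfolding pX_def by auto
  qed
  define X where "X = loc_frac P (polyA R) Xp \<one>\<^bsub>P\<^esub>"
  have Xc: "X \<in> carrier (localization P (polyA R))" unfolding X_def using Xp_closed by simp
  have epsX: "eps0 R X = \<zero>" unfolding X_def using Xp_closed by (simp add: eps_lfrac Xp_def)
  define x where "x = cls X"
  have xc: "x \<in> carrier D" unfolding x_def using Xc by simp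
  have divx: "(\<exists>z\<in>carrier D. cls F = x \<otimes>\<^bsub>D\<^esub> z) \<longleftrightarrow> eps0 R F \<in> p"
    if F: "F \<in> carrier (localization P (polyA R))" for F
  proof
    assume "\<exists>z\<in>carrier D. cls F = x \<otimes>\<^bsub>D\<^esub> z"
    then obtain z where z: "z \<in> carrier D" "cls F = x \<otimes>\<^bsub>D\<^esub> z" by blast
    obtain Z where Z: "Z \<in> carrier (localization P (polyA R))" "z = cls Z" using Dcarr[OF z(1)] by blast
    have "cls (F \<ominus>\<^bsub>localization P (polyA R)\<^esub> X \<otimes>\<^bsub>localization P (polyA R)\<^esub> Z) = cls F \<ominus>\<^bsub>D\<^esub> x \<otimes>\<^bsub>D\<^esub> z"
      using F Z Xc unfolding x_def by (simp add: a_minus_def)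
    also have "\<dots> = \<zero>\<^bsub>D\<^esub>" using z xc by (simp add: D.r_neg a_minus_def)
    finally have "F \<ominus>\<^bsub>localization P (polyA R)\<^esub> X \<otimes>\<^bsub>localization P (polyA R)\<^esub> Z \<in> Q"
      using cls0 F Z Xc by simp
    then have "eps0 R (F \<ominus>\<^bsub>localization P (polyA R)\<^esub> X \<otimes>\<^bsub>localization P (polyA R)\<^esub> Z) \<in> p" by (rule epsQ)
    moreover have "eps0 R (F \<ominus>\<^bsub>localization P (polyA R)\<^esub> X \<otimes>\<^bsub>localization P (polyA R)\<^esub> Z) = eps0 R F"
      using F Z Xc epsX by (simp add: a_minus_def)
    ultimately show "eps0 R F \<in> p" by simp
  next
    assume ep: "eps0 R F \<in> p"
    obtain f s where fs: "F = loc_frac P (polyA R) f s" "f \<in> carrier P" "s \<in> polyA R"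
      using F by (rule AS.carr_E)
    define c where "c = coeff P f 0"
    have cp: "c \<in> p" using ep fs eps_frac unfolding c_def by simp
    have cc: "c \<in> carrier R" unfolding c_def using fs by simp
    have mc: "monom P c 0 \<in> pX p" unfolding pX_def using cc cp I.zero_closed by simp
    have "cls (loc_frac P (polyA R) (monom P c 0) \<one>\<^bsub>P\<^esub>) = \<zero>\<^bsub>D\<^esub>"
      using cls0 Qmem[OF _ AS.one_S] mc cc by simp
    moreover have "loc_frac P (polyA R) f \<one>\<^bsub>P\<^esub> = loc_frac P (polyA R) (monom P c 0) \<one>\<^bsub>P\<^esub>
        \<oplus>\<^bsub>localization P (polyA R)\<^esub> X \<otimes>\<^bsub>localization P (polyA R)\<^esub> loc_frac P (polyA R) (sh f) \<one>\<^bsub>P\<^esub>"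
    proof -
      have "loc_frac P (polyA R) f \<one>\<^bsub>P\<^esub> = loc_frac P (polyA R) (monom P c 0 \<oplus>\<^bsub>P\<^esub> Xp \<otimes>\<^bsub>P\<^esub> sh f) \<one>\<^bsub>P\<^esub>"
        using sh_decomp[OF fs(2)] unfolding c_def by simp
      then show ?thesis using cc Xp_closed sh_closed[OF fs(2)] unfolding X_def by simp
    qed
    ultimately have e1: "cls (loc_frac P (polyA R) f \<one>\<^bsub>P\<^esub>) = x \<otimes>\<^bsub>D\<^esub> cls (loc_frac P (polyA R) (sh f) \<one>\<^bsub>P\<^esub>)"
      using cc Xc sh_closed[OF fs(2)] unfolding x_def by simp
    have e2: "F = loc_frac P (polyA R) f \<one>\<^bsub>P\<^esub> \<otimes>\<^bsub>localization P (polyA R)\<^esub> loc_frac P (polyA R) \<one>\<^bsub>P\<^esub> s"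
      unfolding fs(1) by (rule AS.frac_decomp[OF fs(2) fs(3)])
    have w: "cls (loc_frac P (polyA R) \<one>\<^bsub>P\<^esub> s) \<in> carrier D" using fs(3) AS.one_S AS.carr_frac by simp
    have v: "cls (loc_frac P (polyA R) (sh f) \<one>\<^bsub>P\<^esub>) \<in> carrier D" using sh_closed[OF fs(2)] by simp
    have "cls F = x \<otimes>\<^bsub>D\<^esub> (cls (loc_frac P (polyA R) (sh f) \<one>\<^bsub>P\<^esub>) \<otimes>\<^bsub>D\<^esub> cls (loc_frac P (polyA R) \<one>\<^bsub>P\<^esub> s))"
      using e1 e2 fs AS.one_S AS.carr_frac w v xc by (simp add: D.m_assoc)
    then show "\<exists>z\<in>carrier D. cls F = x \<otimes>\<^bsub>D\<^esub> z" using w v by blast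
  qed
  define aa where "aa = cls (iota a)"
  have iac: "iota a \<in> carrier (localization P (polyA R))" using ring_hom_closed[OF iota_hom ac] .
  have aac: "aa \<in> carrier D" unfolding aa_def using iac by simp
  have eps_ia: "eps0 R (iota a) = a" unfolding iota_def using ac by (simp add: eps_lfrac)
  have x0: "x \<noteq> \<zero>\<^bsub>D\<^esub>"
  proof
    assume "x = \<zero>\<^bsub>D\<^esub>"
    then have "X \<in> Q" using cls0 Xc unfolding x_def by simp
    then have "Xp \<in> pX p" using Qmem[OF Xp_closed AS.one_S] unfolding X_def by simp
    then have "coeff P Xp 1 \<in> p" unfolding pX_def by blast
    then show False using one_notp by (simp add: Xp_def)
  qed
  have H1: "(\<exists>z'\<in>carrier D. b = x \<otimes>\<^bsub>D\<^esub> z') \<or> (\<exists>z'\<in>carrier D. c = x \<otimes>\<^bsub>D\<^esub> z')"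
    if bcz: "b \<in> carrier D" "c \<in> carrier D" "z \<in> carrier D" "b \<otimes>\<^bsub>D\<^esub> c = x \<otimes>\<^bsub>D\<^esub> z" for b c z
  proof -
    obtain B where B: "B \<in> carrier (localization P (polyA R))" "b = cls B" using Dcarr bcz(1) by blast
    obtain C where C: "C \<in> carrier (localization P (polyA R))" "c = cls C" using Dcarr bcz(2) by blast
    have "cls (B \<otimes>\<^bsub>localization P (polyA R)\<^esub> C) = x \<otimes>\<^bsub>D\<^esub> z" using B C bcz by simp
    then have "eps0 R (B \<otimes>\<^bsub>localization P (polyA R)\<^esub> C) \<in> p" using divx[of "B \<otimes>\<^bsub>localization P (polyA R)\<^esub> C"] B C bcz(3) by auto
    then have "eps0 R B \<otimes> eps0 R C \<in> p" using B C by simp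
    then have "eps0 R B \<in> p \<or> eps0 R C \<in> p" using I.I_prime B C by simp
    then show ?thesis using divx B C by blast
  qed
  have H2: "aa \<noteq> x \<otimes>\<^bsub>D\<^esub> z" if "z \<in> carrier D" for z
  proof
    assume "aa = x \<otimes>\<^bsub>D\<^esub> z"
    then have "eps0 R (iota a) \<in> p" using divx[OF iac] that unfolding aa_def by blast
    then show False using eps_ia a by simp
  qed
  have H3: "\<one>\<^bsub>D\<^esub> \<ominus>\<^bsub>D\<^esub> c \<otimes>\<^bsub>D\<^esub> aa \<noteq> x \<otimes>\<^bsub>D\<^esub> z" if cz: "c \<in> carrier D" "z \<in> carrier D" for c z
  proof
    assume e: "\<one>\<^bsub>D\<^esub> \<ominus>\<^bsub>D\<^esub> c \<otimes>\<^bsub>D\<^esub> aa = x \<otimes>\<^bsub>D\<^esub> z"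
    obtain C where C: "C \<in> carrier (localization P (polyA R))" "c = cls C" using Dcarr cz(1) by blast
    let ?G = "\<one>\<^bsub>localization P (polyA R)\<^esub> \<ominus>\<^bsub>localization P (polyA R)\<^esub> C \<otimes>\<^bsub>localization P (polyA R)\<^esub> iota a"
    have Gc: "?G \<in> carrier (localization P (polyA R))" using C iac by simp
    have "cls ?G = \<one>\<^bsub>D\<^esub> \<ominus>\<^bsub>D\<^esub> c \<otimes>\<^bsub>D\<^esub> aa" using C iac unfolding aa_def by (simp add: a_minus_def)
    then have "eps0 R ?G \<in> p" using divx[OF Gc] e cz(2) by auto
    moreover have "eps0 R ?G = \<one> \<ominus> eps0 R C \<otimes> a" using C iac eps_ia by (simp add: a_minus_def)
    ultimately have "\<one> \<ominus> eps0 R C \<otimes> a \<in> J" using J(2) by auto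
    moreover have "eps0 R C \<otimes> a \<in> J" using a(1) C JI.I_l_closed by simp
    ultimately have "(\<one> \<ominus> eps0 R C \<otimes> a) \<oplus> eps0 R C \<otimes> a \<in> J" using JI.a_closed by blast
    moreover have "(\<one> \<ominus> eps0 R C \<otimes> a) \<oplus> eps0 R C \<otimes> a = \<one>"
      using C ac by (simp add: a_minus_def R.a_assoc R.l_neg)
    ultimately show False using one_notJ by simp
  qed
  have "\<not> valuation_domain D"
    by (rule D.not_val_prufer(1)[OF aac xc x0]) (fact H1, fact H2, fact H3)
  moreover have "\<not> prufer_domain D"
    by (rule D.not_val_prufer(2)[OF aac xc x0]) (fact H1, fact H2, fact H3)
  ultimately show ?thesis using QP unfolding D_def by blast
qed

end

theorem mainTheorem2:
  fixes R :: "('a, 'm) ring_scheme"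
  assumes "cring R"
  shows "(residually principal_domain (RXA R) \<longleftrightarrow> zero_dimensional R)
       \<and> (residually valuation_domain (RXA R) \<longleftrightarrow> zero_dimensional R)
       \<and> (residually bezout_domain (RXA R) \<longleftrightarrow> zero_dimensional R)
       \<and> (residually prufer_domain (RXA R) \<longleftrightarrow> zero_dimensional R)"
proof -
  interpret U: UP_cring R "UP R" by (intro UP_cring.intro assms)
  have RXA: "RXA R = localization (UP R) (polyA R)" by (simp add: RXA_def)
  have pos: "principal_domain (RXA R Quot Q) \<and> valuation_domain (RXA R Quot Q)
    \<and> bezout_domain (RXA R Quot Q) \<and> prufer_domain (RXA R Quot Q)"
    if zd: "zero_dimensional R" and Q: "primeideal Q (RXA R)" for Q
    using U.zd_nf[OF zd] Q unfolding RXA by blast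
  have neg: "\<exists>Q. primeideal Q (RXA R) \<and> \<not> principal_domain (RXA R Quot Q) \<and> \<not> valuation_domain (RXA R Quot Q)
    \<and> \<not> bezout_domain (RXA R Quot Q) \<and> \<not> prufer_domain (RXA R Quot Q)"
    if nzd: "\<not> zero_dimensional R"
  proof -
    obtain Q where Q: "primeideal Q (RXA R)" "\<not> valuation_domain (RXA R Quot Q)" "\<not> prufer_domain (RXA R Quot Q)"
      using U.nzd_bad[OF nzd] unfolding RXA by blast
    have dom: "domain (RXA R Quot Q)" by (rule primeideal.quotient_is_domain[OF Q(1)])
    have nb: "\<not> bezout_domain (RXA R Quot Q)" using domain.bezout_prufer[OF dom] Q(3) by blast
    have np: "\<not> principal_domain (RXA R Quot Q)" using domain.pid_bezout[OF dom] nb by blast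
    show ?thesis using Q nb np by blast
  qed
  show ?thesis
  proof (cases "zero_dimensional R")
    case True
    then show ?thesis unfolding residually_def using pos by blast
  next
    case False
    then show ?thesis unfolding residually_def using neg[OF False] by blast
  qed
qed


end
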